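(* Let $\mathfrak a$ and $A$ be as in the context. Let $R$ be an $A$-module with a decreasing filtration by $A$-submodules $\cdots\supseteq{}^{i-1}R\supseteq{}^iR\supseteq{}^{i+1}R\supseteq\cdots$ such that ${}^iR=R$ for $i\ll0$, ${}^iR=0$ for $i\gg0$, and each ${}^iR/{}^{i+1}R$ is projective as an $\mathfrak a$-module. Let $N$ be an admissible hybrid $A$-module and $\phi:R\twoheadrightarrow N$ a surjective $A$-module homomorphism with $\phi({}^iR)=N_{\ge i}$ for every $i\in\mathbb Z$. Then there is a choice of $\mathfrak a_0$-submodules $h_i\subseteq{}^iR$, each an $\mathfrak a_0$-stable complement to ${}^{i+1}R+\mathrm{rad}^\flat({}^iR)$ in ${}^iR$, such that $\phi(h_i)\subseteq N_i$ for all $i$. The $\mathfrak a$-grading on $R$ obtained by placing $h_i$ in grade $i$ (so that $R=\mathfrak a h\cong\bigoplus_i\mathfrak a\otimes_{\mathfrak a_0}h_i$) makes $R$ an admissible hybrid $A$-module and $\phi$ a surjective morphism of admissible hybrid $A$-modules.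
   Context: All algebras/modules finite dimensional over a field. $\mathfrak a=\bigoplus_{n\ge0}\mathfrak a_n$ is positively graded and $\mathfrak a\to A$ is an algebra homomorphism such that $\mathfrak a_{\ge j}A$ is a two-sided ideal of $A$ for each $j\ge0$, where $\mathfrak a_{\ge j}=\bigoplus_{i\ge j}\mathfrak a_i$. For an $\mathfrak a$-module $X$, $\mathrm{rad}^\flat X=\mathfrak a_{\ge1}X$. A hybrid $A$-module is an $A$-module with a fixed grading making it a graded $\mathfrak a$-module (with $\mathfrak a$ acting via $\mathfrak a\to A$); it is admissible if each $N_{\ge j}=\bigoplus_{i\ge j}N_i$ is an $A$-submodule. Morphisms of hybrid modules are $A$-maps preserving gradings. *)

theory Defs
  imports Main "HOL.Vector_Spaces"
begin

(* The algebras a (graded)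
   and A are types 'a, 'b of class ring_1 equipped with k-scalar multiplications
   smA, smB.  An A-module is a type 'm::ab_group_add with an action
   act :: 'b => 'm => 'm; its k-structure is c.m = (c 1_A).m, and its a-module
   structure is x.m = (f x).m via the algebra homomorphism f : a -> A. *)

definition k_algebra :: "('k::field \<Rightarrow> 'a::ring_1 \<Rightarrow> 'a) \<Rightarrow> bool" where
  "k_algebra sm \<longleftrightarrow> vector_space sm
     \<and> (\<forall>c x y. sm c (x * y) = sm c x * y \<and> sm c (x * y) = x * sm c y)
     \<and> (\<exists>B. finite B \<and> module.span sm B = UNIV)"

definition alg_hom ::
  "('k::field \<Rightarrow> 'a::ring_1 \<Rightarrow> 'a) \<Rightarrow> ('k \<Rightarrow> 'b::ring_1 \<Rightarrow> 'b) \<Rightarrow> ('a \<Rightarrow> 'b) \<Rightarrow> bool" where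
  "alg_hom smA smB f \<longleftrightarrow> f 1 = 1 \<and> (\<forall>x y. f (x * y) = f x * f y)
     \<and> (\<forall>x y. f (x + y) = f x + f y) \<and> (\<forall>c x. f (smA c x) = smB c (f x))"

definition direct_decomp :: "('k::field \<Rightarrow> 'v::ab_group_add \<Rightarrow> 'v) \<Rightarrow> ('i \<Rightarrow> 'v set) \<Rightarrow> bool" where
  "direct_decomp sm G \<longleftrightarrow> (\<forall>i. module.subspace sm (G i))
     \<and> (\<forall>v. \<exists>!c. finite {i. c i \<noteq> 0} \<and> (\<forall>i. c i \<in> G i) \<and> v = sum c {i. c i \<noteq> 0})"

definition graded_algebra :: "('k::field \<Rightarrow> 'a::ring_1 \<Rightarrow> 'a) \<Rightarrow> (nat \<Rightarrow> 'a set) \<Rightarrow> bool" where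
  "graded_algebra smA ga \<longleftrightarrow> direct_decomp smA ga \<and> 1 \<in> ga 0
     \<and> (\<forall>i j. \<forall>x\<in>ga i. \<forall>y\<in>ga j. x * y \<in> ga (i + j))"

definition a_ge :: "('k::field \<Rightarrow> 'a::ring_1 \<Rightarrow> 'a) \<Rightarrow> (nat \<Rightarrow> 'a set) \<Rightarrow> nat \<Rightarrow> 'a set" where
  "a_ge smA ga j = module.span smA (\<Union>i\<in>{j..}. ga i)"

definition two_sided_ideal :: "('k::field \<Rightarrow> 'b::ring_1 \<Rightarrow> 'b) \<Rightarrow> 'b set \<Rightarrow> bool" where
  "two_sided_ideal smB I \<longleftrightarrow> module.subspace smB I
     \<and> (\<forall>a. \<forall>x\<in>I. a * x \<in> I \<and> x * a \<in> I)"

definition setting ::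
  "('k::field \<Rightarrow> 'a::ring_1 \<Rightarrow> 'a) \<Rightarrow> (nat \<Rightarrow> 'a set) \<Rightarrow> ('k \<Rightarrow> 'b::ring_1 \<Rightarrow> 'b) \<Rightarrow> ('a \<Rightarrow> 'b) \<Rightarrow> bool" where
  "setting smA ga smB f \<longleftrightarrow> k_algebra smA \<and> k_algebra smB \<and> graded_algebra smA ga
     \<and> alg_hom smA smB f
     \<and> (\<forall>j. two_sided_ideal smB (module.span smB {f x * b | x b. x \<in> a_ge smA ga j}))"

definition kscale :: "('k::field \<Rightarrow> 'b::ring_1 \<Rightarrow> 'b) \<Rightarrow> ('b \<Rightarrow> 'm \<Rightarrow> 'm) \<Rightarrow> 'k \<Rightarrow> 'm \<Rightarrow> 'm" where
  "kscale smB act c m = act (smB c 1) m"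

definition A_module :: "('k::field \<Rightarrow> 'b::ring_1 \<Rightarrow> 'b) \<Rightarrow> ('b \<Rightarrow> 'm::ab_group_add \<Rightarrow> 'm) \<Rightarrow> bool" where
  "A_module smB act \<longleftrightarrow> (\<forall>a b m. act (a * b) m = act a (act b m)) \<and> (\<forall>m. act 1 m = m)
     \<and> (\<forall>a b m. act (a + b) m = act a m + act b m) \<and> (\<forall>a m n. act a (m + n) = act a m + act a n)
     \<and> (\<exists>B. finite B \<and> module.span (kscale smB act) B = UNIV)"

text \<open>X is a submodule for the action of the elements of S (S = UNIV: A-submodule;
  S = f ` a_0: a_0-submodule).\<close>
definition submod :: "('b \<Rightarrow> 'm::ab_group_add \<Rightarrow> 'm) \<Rightarrow> 'b set \<Rightarrow> 'm set \<Rightarrow> bool" where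
  "submod act S X \<longleftrightarrow> 0 \<in> X \<and> (\<forall>x\<in>X. \<forall>y\<in>X. x + y \<in> X) \<and> (\<forall>a\<in>S. \<forall>x\<in>X. act a x \<in> X)"

definition set_plus :: "'m::ab_group_add set \<Rightarrow> 'm set \<Rightarrow> 'm set" where
  "set_plus X Y = {x + y | x y. x \<in> X \<and> y \<in> Y}"

definition rad_flat ::
  "('k::field \<Rightarrow> 'a::ring_1 \<Rightarrow> 'a) \<Rightarrow> (nat \<Rightarrow> 'a set) \<Rightarrow> ('k \<Rightarrow> 'b::ring_1 \<Rightarrow> 'b) \<Rightarrow> ('a \<Rightarrow> 'b)
    \<Rightarrow> ('b \<Rightarrow> 'm::ab_group_add \<Rightarrow> 'm) \<Rightarrow> 'm set \<Rightarrow> 'm set" where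
  "rad_flat smA ga smB f act X =
     module.span (kscale smB act) {act (f x) m | x m. x \<in> a_ge smA ga 1 \<and> m \<in> X}"

text \<open>The quotient a-module X/Y (Y \<subseteq> X submodules of an A-module, a acting via f) is
  projective, i.e. a direct summand of a free a-module a^n (finite rank suffices since
  everything is finite dimensional).  Homomorphisms X/Y -> a^n are encoded as
  a-linear maps s on X vanishing on Y, and homomorphisms a^n -> X/Y by a-linear lifts
  p : a^n -> X (which exist since a^n is free); the summand condition p o s = id on
  X/Y reads p (s m) - m \<in> Y.  Elements of a^n are functions nat => 'a supported on {..<n}.\<close>
definition free_mod :: "nat \<Rightarrow> (nat \<Rightarrow> 'a::ring_1) set" where
  "free_mod n = {v. \<forall>k\<ge>n. v k = 0}"

definition projective_quotient ::
  "(nat \<Rightarrow> 'a::ring_1 set) \<Rightarrow> ('a \<Rightarrow> 'b::ring_1) \<Rightarrow> ('b \<Rightarrow> 'm::ab_group_add \<Rightarrow> 'm)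
     \<Rightarrow> 'm set \<Rightarrow> 'm set \<Rightarrow> bool" where
  "projective_quotient ga f act X Y \<longleftrightarrow>
     (\<exists>n s p.
        (\<forall>m\<in>X. s m \<in> free_mod n)
      \<and> (\<forall>m\<in>X. \<forall>m'\<in>X. s (m + m') = (\<lambda>k. s m k + s m' k))
      \<and> (\<forall>x m. m \<in> X \<longrightarrow> s (act (f x) m) = (\<lambda>k. x * s m k))
      \<and> (\<forall>m\<in>Y. s m = (\<lambda>k. 0))
      \<and> (\<forall>v\<in>free_mod n. p v \<in> X)
      \<and> (\<forall>v\<in>free_mod n. \<forall>w\<in>free_mod n. p (\<lambda>k. v k + w k) = p v + p w)
      \<and> (\<forall>x. \<forall>v\<in>free_mod n. p (\<lambda>k. x * v k) = act (f x) (p v))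
      \<and> (\<forall>m\<in>X. p (s m) - m \<in> Y))"

definition hybrid ::
  "('k::field \<Rightarrow> 'a::ring_1 \<Rightarrow> 'a) \<Rightarrow> (nat \<Rightarrow> 'a set) \<Rightarrow> ('k \<Rightarrow> 'b::ring_1 \<Rightarrow> 'b) \<Rightarrow> ('a \<Rightarrow> 'b)
    \<Rightarrow> ('b \<Rightarrow> 'm::ab_group_add \<Rightarrow> 'm) \<Rightarrow> (int \<Rightarrow> 'm set) \<Rightarrow> bool" where
  "hybrid smA ga smB f act G \<longleftrightarrow> A_module smB act \<and> direct_decomp (kscale smB act) G
     \<and> (\<forall>j i. \<forall>x\<in>ga j. \<forall>m\<in>G i. act (f x) m \<in> G (int j + i))"

definition grade_ge :: "('k::field \<Rightarrow> 'b::ring_1 \<Rightarrow> 'b) \<Rightarrow> ('b \<Rightarrow> 'm::ab_group_add \<Rightarrow> 'm)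
    \<Rightarrow> (int \<Rightarrow> 'm set) \<Rightarrow> int \<Rightarrow> 'm set" where
  "grade_ge smB act G j = module.span (kscale smB act) (\<Union>i\<in>{j..}. G i)"

definition admissible_hybrid ::
  "('k::field \<Rightarrow> 'a::ring_1 \<Rightarrow> 'a) \<Rightarrow> (nat \<Rightarrow> 'a set) \<Rightarrow> ('k \<Rightarrow> 'b::ring_1 \<Rightarrow> 'b) \<Rightarrow> ('a \<Rightarrow> 'b)
    \<Rightarrow> ('b \<Rightarrow> 'm::ab_group_add \<Rightarrow> 'm) \<Rightarrow> (int \<Rightarrow> 'm set) \<Rightarrow> bool" where
  "admissible_hybrid smA ga smB f act G \<longleftrightarrow> hybrid smA ga smB f act G
     \<and> (\<forall>j. submod act UNIV (grade_ge smB act G j))"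

definition A_hom :: "('b \<Rightarrow> 'm::ab_group_add \<Rightarrow> 'm) \<Rightarrow> ('b \<Rightarrow> 'n::ab_group_add \<Rightarrow> 'n) \<Rightarrow> ('m \<Rightarrow> 'n) \<Rightarrow> bool" where
  "A_hom actM actN \<phi> \<longleftrightarrow> (\<forall>m m'. \<phi> (m + m') = \<phi> m + \<phi> m') \<and> (\<forall>a m. \<phi> (actM a m) = actN a (\<phi> m))"

definition hybrid_morphism ::
  "('b \<Rightarrow> 'm::ab_group_add \<Rightarrow> 'm) \<Rightarrow> (int \<Rightarrow> 'm set) \<Rightarrow> ('b \<Rightarrow> 'n::ab_group_add \<Rightarrow> 'n) \<Rightarrow> (int \<Rightarrow> 'n set)
    \<Rightarrow> ('m \<Rightarrow> 'n) \<Rightarrow> bool" where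
  "hybrid_morphism actM GM actN GN \<phi> \<longleftrightarrow> A_hom actM actN \<phi> \<and> (\<forall>i. \<phi> ` GM i \<subseteq> GN i)"

definition grading_from ::
  "(nat \<Rightarrow> 'a::ring_1 set) \<Rightarrow> ('k::field \<Rightarrow> 'b::ring_1 \<Rightarrow> 'b) \<Rightarrow> ('a \<Rightarrow> 'b)
    \<Rightarrow> ('b \<Rightarrow> 'm::ab_group_add \<Rightarrow> 'm) \<Rightarrow> (int \<Rightarrow> 'm set) \<Rightarrow> int \<Rightarrow> 'm set" where
  "grading_from ga smB f act h n = module.span (kscale smB act)
     {act (f x) m | x m i. i \<le> n \<and> x \<in> ga (nat (n - i)) \<and> m \<in> h i}"

end

theory Submission
  imports Defs
begin



section \<open>Generic facts about A-modules\<close>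

lemma Am:
  assumes "A_module smB act"
  shows Am_mult: "act (a * b) m = act a (act b m)"
    and Am_one: "act 1 m = m"
    and Am_addl: "act (a + b) m = act a m + act b m"
    and Am_addr: "act a (m + n) = act a m + act a n"
  using assms unfolding A_module_def by auto

lemma Am_more:
  fixes act :: "'b::ring_1 \<Rightarrow> 'm::ab_group_add \<Rightarrow> 'm"
  assumes "A_module smB act"
  shows Am_zerol: "act 0 m = 0"
    and Am_zeror: "act a 0 = 0"
    and Am_negr: "act a (- m) = - act a m"
    and Am_negl: "act (- a) m = - act a m"
    and Am_diffr: "act a (m - n) = act a m - act a n"
    and Am_diffl: "act (a - b) m = act a m - act b m"
proof -
  have "act 0 m + act 0 m = act 0 m" using Am_addl[OF assms, of 0 0 m] by simp
  then show z: "act 0 m = 0" by simp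
  have "act a 0 + act a 0 = act a 0" using Am_addr[OF assms, of a 0 0] by simp
  then show z2: "act a 0 = 0" by simp
  have "act a (- x) + act a x = 0" for x using Am_addr[OF assms, of a "-x" x] z2 by simp
  then have n1: "act a (- x) = - act a x" for x by (simp add: eq_neg_iff_add_eq_0)
  then show "act a (- m) = - act a m" .
  have "act (- x) m + act x m = 0" for x using Am_addl[OF assms, of "-x" x m] z by simp
  then have n2: "act (- x) m = - act x m" for x by (simp add: eq_neg_iff_add_eq_0)
  then show "act (- a) m = - act a m" .
  show "act a (m - n) = act a m - act a n"
    using Am_addr[OF assms, of a m "-n"] n1 by simp
  show "act (a - b) m = act a m - act b m"
    using Am_addl[OF assms, of a "-b" m] n2 by simp
qed

lemma Am_sumr:
  fixes act :: "'b::ring_1 \<Rightarrow> 'm::ab_group_add \<Rightarrow> 'm"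
  assumes "A_module smB act"
  shows "act a (sum g S) = (\<Sum>x\<in>S. act a (g x))"
  by (induct S rule: infinite_finite_induct) (simp_all add: Am_zeror[OF assms] Am_addr[OF assms])

lemma Am_suml:
  fixes act :: "'b::ring_1 \<Rightarrow> 'm::ab_group_add \<Rightarrow> 'm"
  assumes "A_module smB act"
  shows "act (sum g S) m = (\<Sum>x\<in>S. act (g x) m)"
  by (induct S rule: infinite_finite_induct) (simp_all add: Am_zerol[OF assms] Am_addl[OF assms])

lemma kscale_module:
  assumes vs: "vector_space smB"
    and alg: "\<forall>c x y. smB c (x * y) = smB c x * y \<and> smB c (x * y) = x * smB c y"
    and am: "A_module smB act"
  shows "module (kscale smB act)"
proof -
  interpret B: vector_space smB by (rule vs)
  have m: "smB a 1 * smB b 1 = smB (a * b) 1" for a b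
    using alg by (metis B.scale_scale mult_1)
  show ?thesis
    unfolding module_def kscale_def
    by (auto simp: Am_addr[OF am] Am_addl[OF am, symmetric] B.scale_left_distrib
          Am_mult[OF am, symmetric] m Am_one[OF am])
qed

lemma submod_neg:
  assumes am: "A_module smB act" and "submod act UNIV X" and "x \<in> X"
  shows "- x \<in> X"
proof -
  have "act (-1) x \<in> X" using assms unfolding submod_def by auto
  then show ?thesis by (simp add: Am_negl[OF am] Am_one[OF am])
qed

lemma submod_diff:
  assumes am: "A_module smB act" and "submod act UNIV X" and "x \<in> X" "y \<in> X"
  shows "x - y \<in> X"
  using submod_neg[OF am assms(2) assms(4)] assms(2,3) unfolding submod_def
  by (metis diff_conv_add_uminus)

lemma submod_sum:
  assumes "submod act S X" and "\<And>i. i \<in> I \<Longrightarrow> g i \<in> X"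
  shows "sum g I \<in> X"
  using assms(2)
proof (induct I rule: infinite_finite_induct)
  case (infinite A) then show ?case using assms(1) by (simp add: submod_def)
next
  case empty then show ?case using assms(1) by (simp add: submod_def)
next
  case (insert x F) then show ?case using assms(1) by (simp add: submod_def)
qed

lemma submod_subspace:
  assumes "module (kscale smB act)" "submod act UNIV X"
  shows "module.subspace (kscale smB act) X"
  using assms unfolding submod_def module.subspace_def[OF assms(1)] kscale_def by auto

section \<open>Homogeneous components in the graded algebra\<close>

definition dec :: "(nat \<Rightarrow> 'a::ring_1 set) \<Rightarrow> 'a \<Rightarrow> nat \<Rightarrow> 'a" where
  "dec ga x = (THE c. finite {i. c i \<noteq> 0} \<and> (\<forall>i. c i \<in> ga i) \<and> x = sum c {i. c i \<noteq> 0})"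




locale gradedA =
  fixes smA :: "'k::field \<Rightarrow> 'a::ring_1 \<Rightarrow> 'a" and ga :: "nat \<Rightarrow> 'a set"
  assumes vsA: "vector_space smA" and ddA: "direct_decomp smA ga" and one0: "1 \<in> ga 0"
    and gmul: "\<And>i j x y. x \<in> ga i \<Longrightarrow> y \<in> ga j \<Longrightarrow> x * y \<in> ga (i + j)"
    and algA1: "\<And>c x y. smA c (x * y) = smA c x * y"
    and algA2: "\<And>c x y. smA c (x * y) = x * smA c y"
    and finA: "\<exists>B. finite B \<and> module.span smA B = UNIV"
begin

sublocale A: vector_space smA by (rule vsA)

lemma ga_sub: "A.subspace (ga i)"
  using ddA unfolding direct_decomp_def by auto

lemma ga_0[simp]: "0 \<in> ga i" using A.subspace_0[OF ga_sub] .
lemma ga_add: "x \<in> ga i \<Longrightarrow> y \<in> ga i \<Longrightarrow> x + y \<in> ga i" using A.subspace_add[OF ga_sub] .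
lemma ga_scale: "x \<in> ga i \<Longrightarrow> smA c x \<in> ga i" using A.subspace_scale[OF ga_sub] .
lemma ga_neg: "x \<in> ga i \<Longrightarrow> - x \<in> ga i" using A.subspace_neg[OF ga_sub] .
lemma ga_sum: "(\<And>j. j \<in> J \<Longrightarrow> g j \<in> ga i) \<Longrightarrow> sum g J \<in> ga i" using A.subspace_sum[OF ga_sub] .

lemma dec_ex: "\<exists>!c. finite {i. c i \<noteq> 0} \<and> (\<forall>i. c i \<in> ga i) \<and> x = sum c {i. c i \<noteq> 0}"
  using ddA unfolding direct_decomp_def by auto

lemma dec_spec: "finite {i. dec ga x i \<noteq> 0}" "dec ga x i \<in> ga i" "x = sum (dec ga x) {i. dec ga x i \<noteq> 0}"
  using theI'[OF dec_ex[of x]] unfolding dec_def by auto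

lemma dec_unique:
  assumes "finite S" "\<And>i. c i \<in> ga i" "\<And>i. i \<notin> S \<Longrightarrow> c i = 0" "x = sum c S"
  shows "dec ga x = c"
proof -
  have sub: "{i. c i \<noteq> 0} \<subseteq> S" using assms(3) by auto
  have fin: "finite {i. c i \<noteq> 0}" using finite_subset[OF sub assms(1)] .
  have "sum c S = sum c {i. c i \<noteq> 0}"
    by (rule sum.mono_neutral_right[OF assms(1) sub]) auto
  then have "finite {i. c i \<noteq> 0} \<and> (\<forall>i. c i \<in> ga i) \<and> x = sum c {i. c i \<noteq> 0}"
    using fin assms by auto
  then show ?thesis unfolding dec_def by (rule the1_equality[OF dec_ex])
qed

lemma dec_sumS:
  assumes "finite S" "{i. dec ga x i \<noteq> 0} \<subseteq> S"
  shows "x = sum (dec ga x) S"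
proof -
  have "sum (dec ga x) S = sum (dec ga x) {i. dec ga x i \<noteq> 0}"
    by (rule sum.mono_neutral_right[OF assms(1) assms(2)]) auto
  then show ?thesis using dec_spec(3) by metis
qed

lemma dec_hom: "x \<in> ga j \<Longrightarrow> dec ga x = (\<lambda>i. if i = j then x else 0)"
  by (rule dec_unique[of "{j}"]) auto

lemma dec_zero[simp]: "dec ga 0 i = 0"
  using dec_hom[OF ga_0, of 0] by simp

lemma dec_add: "dec ga (x + y) i = dec ga x i + dec ga y i"
proof -
  let ?S = "{i. dec ga x i \<noteq> 0} \<union> {i. dec ga y i \<noteq> 0}"
  have fS: "finite ?S" using dec_spec(1) by auto
  have "dec ga (x + y) = (\<lambda>i. dec ga x i + dec ga y i)"
  proof (rule dec_unique[OF fS])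
    show "dec ga x i + dec ga y i \<in> ga i" for i using dec_spec(2) ga_add by auto
    show "i \<notin> ?S \<Longrightarrow> dec ga x i + dec ga y i = 0" for i by auto
    have "x = sum (dec ga x) ?S" "y = sum (dec ga y) ?S" using dec_sumS fS by auto
    then show "x + y = (\<Sum>i\<in>?S. dec ga x i + dec ga y i)" by (simp add: sum.distrib)
  qed
  then show ?thesis by simp
qed

lemma dec_scale: "dec ga (smA c x) i = smA c (dec ga x i)"
proof -
  let ?S = "{i. dec ga x i \<noteq> 0}"
  have "dec ga (smA c x) = (\<lambda>i. smA c (dec ga x i))"
  proof (rule dec_unique[OF dec_spec(1)])
    show "smA c (dec ga x i) \<in> ga i" for i using dec_spec(2) ga_scale by auto
    show "i \<notin> ?S \<Longrightarrow> smA c (dec ga x i) = 0" for i by auto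
    show "smA c x = (\<Sum>i\<in>?S. smA c (dec ga x i))"
      by (subst dec_spec(3)) (simp add: A.scale_sum_right)
  qed
  then show ?thesis by simp
qed

lemma dec_neg: "dec ga (- x) i = - dec ga x i"
  using dec_add[of "-x" x i] by (simp add: eq_neg_iff_add_eq_0)

lemma dec_diff: "dec ga (x - y) i = dec ga x i - dec ga y i"
  using dec_add[of x "-y" i] dec_neg by simp

lemma dec_sum: "dec ga (sum g J) i = (\<Sum>j\<in>J. dec ga (g j) i)"
  by (induct J rule: infinite_finite_induct) (simp_all add: dec_add)

lemma dec_eq_iff: "x = y \<longleftrightarrow> (\<forall>i. dec ga x i = dec ga y i)"
  by (metis dec_spec(3) ext)

lemma dec_mult:
  assumes x: "x \<in> ga j"
  shows "dec ga (x * y) i = (if j \<le> i then x * dec ga y (i - j) else 0)"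
proof -
  let ?T = "{i. dec ga y i \<noteq> 0}"
  let ?S = "(\<lambda>d. d + j) ` ?T"
  have fS: "finite ?S" using dec_spec(1) by auto
  have "dec ga (x * y) = (\<lambda>i. if j \<le> i then x * dec ga y (i - j) else 0)"
  proof (rule dec_unique[OF fS])
    show "(if j \<le> i then x * dec ga y (i - j) else 0) \<in> ga i" for i
      using gmul[OF x dec_spec(2)[of y "i - j"]] by auto
    show "i \<notin> ?S \<Longrightarrow> (if j \<le> i then x * dec ga y (i - j) else 0) = 0" for i
      by (cases "j \<le> i") (auto simp: image_iff dest: spec[of _ "i - j"])
    have "(\<Sum>i\<in>?S. if j \<le> i then x * dec ga y (i - j) else 0) = (\<Sum>d\<in>?T. x * dec ga y d)"
      by (subst sum.reindex) (auto simp: inj_on_def)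
    also have "\<dots> = x * y" by (subst (2) dec_spec(3)) (simp add: sum_distrib_left)
    finally show "x * y = (\<Sum>i\<in>?S. if j \<le> i then x * dec ga y (i - j) else 0)" by simp
  qed
  then show ?thesis by simp
qed

lemma dec_mult0:
  assumes x: "x \<in> ga 0"
  shows "dec ga (x * y) i = x * dec ga y i"
  using dec_mult[OF x] by simp

lemma span_ga: "A.span (\<Union>i. ga i) = UNIV"
proof -
  have "x \<in> A.span (\<Union>i. ga i)" for x
    apply (subst dec_spec(3)) apply (rule A.span_sum)
    subgoal for i by (rule A.span_base, rule UN_I[of i]) (auto simp: dec_spec(2))
    done
  then show ?thesis by auto
qed

lemma a_ge0: "a_ge smA ga 0 = UNIV"
  unfolding a_ge_def using span_ga by auto

lemma smA1_ga0: "smA c 1 \<in> ga 0" using ga_scale one0 .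

lemma smA_mult1: "smA c x = smA c 1 * x"
  using algA1[of c 1 x] by simp

lemma a_ge_dec:
  assumes "x \<in> a_ge smA ga t" "i < t" shows "dec ga (x * y) i = 0"
  using assms(1) unfolding a_ge_def
proof (induct rule: A.span_induct_alt)
  case base then show ?case by simp
next
  case (step c x z)
  then obtain d where d: "x \<in> ga d" "d \<ge> t" by auto
  have "smA c x * y = smA c (x * y)" by (simp add: algA1)
  then show ?case using step d assms(2)
    by (simp add: distrib_right dec_add dec_scale dec_mult)
qed

lemma a_ge_mult:
  assumes "x \<in> a_ge smA ga t" "y \<in> a_ge smA ga u" shows "x * y \<in> a_ge smA ga (t + u)"
  using assms(1) unfolding a_ge_def
proof (induct rule: A.span_induct_alt)
  case base then show ?case by (simp add: A.span_zero)
next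
  case (step c x z)
  then obtain d where d: "x \<in> ga d" "d \<ge> t" by auto
  have "x * y \<in> A.span (\<Union> (ga ` {t + u..}))"
    using assms(2) unfolding a_ge_def
  proof (induct rule: A.span_induct_alt)
    case base then show ?case by (simp add: A.span_zero)
  next
    case (step c' y' w)
    then obtain d' where d': "y' \<in> ga d'" "d' \<ge> u" by auto
    have "x * (smA c' y' + w) = smA c' (x * y') + x * w" by (simp add: distrib_left algA2)
    moreover have "x * y' \<in> A.span (\<Union> (ga ` {t + u..}))"
      using gmul[OF d(1) d'(1)] d d' by (intro A.span_base UN_I[of "d + d'"]) auto
    ultimately show ?case using step by (auto intro!: A.span_add A.span_scale)
  qed
  moreover have "smA c x * y + z * y = smA c (x * y) + z * y" by (simp add: algA1)
  ultimately show ?case using step by (auto simp: distrib_right intro!: A.span_add A.span_scale)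
qed

lemma ga_a_ge: "x \<in> ga d \<Longrightarrow> t \<le> d \<Longrightarrow> x \<in> a_ge smA ga t"
  unfolding a_ge_def by (auto intro!: A.span_base)

lemma minus_dec0_a_ge1: "x - dec ga x 0 \<in> a_ge smA ga 1"
proof -
  let ?S = "{i. dec ga x i \<noteq> 0}"
  have "x = sum (dec ga x) (?S \<union> {0})" using dec_sumS[of "?S \<union> {0}"] dec_spec(1) by auto
  also have "\<dots> = dec ga x 0 + sum (dec ga x) (?S - {0})"
    using dec_spec(1) by (metis Un_insert_right finite_insert insert_Diff_single sum.insert_remove sup_bot.right_neutral)
  finally have "x - dec ga x 0 = sum (dec ga x) (?S - {0})" by (simp add: algebra_simps)
  also have "\<dots> \<in> a_ge smA ga 1"
    unfolding a_ge_def apply (rule A.span_sum)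
    subgoal for i by (rule A.span_base, rule UN_I[of i]) (auto simp: dec_spec(2))
    done
  finally show ?thesis .
qed

lemma nilpotent: "\<exists>D. \<forall>d\<ge>D. ga d = {0}"
proof -
  obtain B where B: "finite B" "A.span B = UNIV" using finA by auto
  let ?U = "\<Union>b\<in>B. {i. dec ga b i \<noteq> 0}"
  have fU: "finite ?U" using B(1) dec_spec(1) by auto
  obtain D where D: "\<And>i. i \<in> ?U \<Longrightarrow> i < D"
    using fU by (metis finite_nat_set_iff_bounded)
  have *: "dec ga x d = 0" if "d \<ge> D" for x d
  proof -
    have "x \<in> A.span B" using B by auto
    then show ?thesis
    proof (induct rule: A.span_induct_alt)
      case base then show ?case by simp
    next
      case (step c b y)
      have "dec ga b d = 0" using D[of d] step(1) that by force
      then show ?case using step by (simp add: dec_add dec_scale)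
    qed
  qed
  show ?thesis
  proof (intro exI allI impI)
    fix d assume "d \<ge> D"
    show "ga d = {0}"
    proof
      show "ga d \<subseteq> {0}"
      proof
        fix x assume "x \<in> ga d"
        then have "dec ga x d = x" using dec_hom by simp
        then show "x \<in> {0}" using *[OF \<open>d \<ge> D\<close>] by simp
      qed
    qed simp
  qed
qed

lemma a_ge_nil: "\<exists>D. a_ge smA ga D = {0}"
proof -
  obtain D where D: "\<forall>d\<ge>D. ga d = {0}" using nilpotent by auto
  have "(\<Union> (ga ` {D..})) \<subseteq> {0}" using D by auto
  then have "a_ge smA ga D \<subseteq> {0}" unfolding a_ge_def
    using A.span_minimal[of _ "{0}"] by (simp add: A.subspace_single_0)
  then show ?thesis using A.span_zero unfolding a_ge_def by blast
qed

end



definition delta :: "nat \<Rightarrow> nat \<Rightarrow> 'a::ring_1" where "delta k = (\<lambda>l. if l = k then 1 else 0)"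

locale ctx = gradedA smA ga
  for smA :: "'k::field \<Rightarrow> 'a::ring_1 \<Rightarrow> 'a" and ga :: "nat \<Rightarrow> 'a set" +
  fixes smB :: "'k \<Rightarrow> 'b::ring_1 \<Rightarrow> 'b"
    and f :: "'a \<Rightarrow> 'b"
    and actR :: "'b \<Rightarrow> 'r::ab_group_add \<Rightarrow> 'r"
    and FR :: "int \<Rightarrow> 'r set"
    and actN :: "'b \<Rightarrow> 'n::ab_group_add \<Rightarrow> 'n"
    and GN :: "int \<Rightarrow> 'n set"
    and \<phi> :: "'r \<Rightarrow> 'n"
  assumes vsB: "vector_space smB"
    and algB1: "\<And>c x y. smB c (x * y) = smB c x * y"
    and algB2: "\<And>c x y. smB c (x * y) = x * smB c y"
    and fhom: "alg_hom smA smB f"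
    and ideal: "\<forall>j. two_sided_ideal smB (module.span smB {f x * b | x b. x \<in> a_ge smA ga j})"
    and R_mod: "A_module smB actR"
    and filt_sub: "\<forall>i. submod actR UNIV (FR i)"
    and filt_dec: "\<forall>i. FR (i + 1) \<subseteq> FR i"
    and filt_low: "\<exists>i0. \<forall>i\<le>i0. FR i = UNIV"
    and filt_high: "\<exists>i1. \<forall>i\<ge>i1. FR i = {0}"
    and filt_proj: "\<forall>i. projective_quotient ga f actR (FR i) (FR (i + 1))"
    and N_adm: "admissible_hybrid smA ga smB f actN GN"
    and phi_hom: "A_hom actR actN \<phi>"
    and phi_filt: "\<forall>i. \<phi> ` FR i = grade_ge smB actN GN i"
begin

sublocale B: vector_space smB by (rule vsB)

abbreviation "kR \<equiv> kscale smB actR"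
abbreviation "kN \<equiv> kscale smB actN"

lemma N_mod: "A_module smB actN"
  using N_adm unfolding admissible_hybrid_def hybrid_def by auto

lemma N_dd: "direct_decomp kN GN"
  using N_adm unfolding admissible_hybrid_def hybrid_def by auto

lemma N_grad: "x \<in> ga j \<Longrightarrow> m \<in> GN i \<Longrightarrow> actN (f x) m \<in> GN (int j + i)"
  using N_adm unfolding admissible_hybrid_def hybrid_def by auto

sublocale R: module kR by (rule kscale_module[OF vsB _ R_mod]) (metis algB1 algB2)
sublocale N: module kN by (rule kscale_module[OF vsB _ N_mod]) (metis algB1 algB2)

lemma f_one[simp]: "f 1 = 1" and f_mult: "f (x * y) = f x * f y" and f_add: "f (x + y) = f x + f y"
  and f_scale: "f (smA c x) = smB c (f x)"
  using fhom unfolding alg_hom_def by auto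

lemma f_zero[simp]: "f 0 = 0"
  using f_add[of 0 0] by simp

lemma f_neg: "f (- x) = - f x"
  using f_add[of "-x" x] by (simp add: eq_neg_iff_add_eq_0)

lemma f_diff: "f (x - y) = f x - f y"
  using f_add[of x "-y"] f_neg by simp

lemma smB_mult1: "smB c x = smB c 1 * x"
  using algB1[of c 1 x] by simp

lemma smB_comm: "smB c 1 * x = x * smB c 1"
  using algB1[of c 1 x] algB2[of c x 1] by simp

lemma kR_def': "kR c m = actR (f (smA c 1)) m"
  by (simp add: kscale_def f_scale)

lemma actR_kR: "actR b (kR c m) = kR c (actR b m)"
  unfolding kscale_def by (simp add: Am_mult[OF R_mod, symmetric] smB_comm)

lemma actN_kN: "actN b (kN c m) = kN c (actN b m)"
  unfolding kscale_def by (simp add: Am_mult[OF N_mod, symmetric] smB_comm)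

lemmas aR = Am_mult[OF R_mod] Am_one[OF R_mod] Am_addl[OF R_mod] Am_addr[OF R_mod]
  Am_zerol[OF R_mod] Am_zeror[OF R_mod] Am_negr[OF R_mod] Am_negl[OF R_mod]
  Am_diffr[OF R_mod] Am_diffl[OF R_mod]

lemmas aN = Am_mult[OF N_mod] Am_one[OF N_mod] Am_addl[OF N_mod] Am_addr[OF N_mod]
  Am_zerol[OF N_mod] Am_zeror[OF N_mod] Am_negr[OF N_mod] Am_negl[OF N_mod]
  Am_diffr[OF N_mod] Am_diffl[OF N_mod]

lemma phi_add: "\<phi> (m + m') = \<phi> m + \<phi> m'" and phi_act: "\<phi> (actR a m) = actN a (\<phi> m)"
  using phi_hom unfolding A_hom_def by auto

lemma phi_zero[simp]: "\<phi> 0 = 0" using phi_add[of 0 0] by simp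
lemma phi_neg: "\<phi> (- m) = - \<phi> m" using phi_add[of "-m" m] by (simp add: eq_neg_iff_add_eq_0)
lemma phi_diff: "\<phi> (m - m') = \<phi> m - \<phi> m'" using phi_add[of m "-m'"] phi_neg by simp
lemma phi_sum: "\<phi> (sum g S) = (\<Sum>x\<in>S. \<phi> (g x))"
  by (induct S rule: infinite_finite_induct) (simp_all add: phi_add)
lemma phi_kR: "\<phi> (kR c m) = kN c (\<phi> m)" unfolding kscale_def by (simp add: phi_act)

lemma FR_0[simp]: "0 \<in> FR i" and FR_add: "x \<in> FR i \<Longrightarrow> y \<in> FR i \<Longrightarrow> x + y \<in> FR i"
  and FR_act: "x \<in> FR i \<Longrightarrow> actR a x \<in> FR i"
  using filt_sub unfolding submod_def by auto

lemma FR_neg: "x \<in> FR i \<Longrightarrow> - x \<in> FR i" using submod_neg[OF R_mod] filt_sub by blast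
lemma FR_diff: "x \<in> FR i \<Longrightarrow> y \<in> FR i \<Longrightarrow> x - y \<in> FR i" using submod_diff[OF R_mod] filt_sub by blast
lemma FR_sum: "(\<And>j. j \<in> J \<Longrightarrow> g j \<in> FR i) \<Longrightarrow> sum g J \<in> FR i"
  using submod_sum filt_sub by blast
lemma FR_subspace: "R.subspace (FR i)"
  using submod_subspace[OF R.module_axioms] filt_sub by blast
lemma FR_kR: "x \<in> FR i \<Longrightarrow> kR c x \<in> FR i" unfolding kscale_def by (rule FR_act)

lemma FR_mono: "i \<le> j \<Longrightarrow> FR j \<subseteq> FR i"
proof -
  assume "i \<le> j"
  then obtain k where k: "j = i + int k" by (metis zle_iff_zadd)
  have "FR (i + int k) \<subseteq> FR i" for k
  proof (induct k)
    case (Suc k)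
    have "FR (i + int (Suc k)) \<subseteq> FR (i + int k)"
      using filt_dec[rule_format, of "i + int k"] by (simp add: ac_simps)
    then show ?case using Suc by blast
  qed simp
  then show ?thesis using k by simp
qed

lemma GN_sub: "N.subspace (GN i)"
  using N_dd unfolding direct_decomp_def by auto

lemma grade_ge_split:
  "grade_ge smB actN GN i \<subseteq> {g + z | g z. g \<in> GN i \<and> z \<in> grade_ge smB actN GN (i + 1)}"
  unfolding grade_ge_def
proof (rule N.span_minimal)
  show "N.subspace {g + z | g z. g \<in> GN i \<and> z \<in> N.span (\<Union> (GN ` {i + 1..}))}"
    using N.subspace_0[OF GN_sub] N.subspace_add[OF GN_sub] N.subspace_scale[OF GN_sub]
    apply (intro N.subspaceI)
      apply (metis (mono_tags, lifting) N.span_zero add_0 mem_Collect_eq)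
     apply (smt (verit, best) N.span_add add.assoc add.left_commute mem_Collect_eq)
    by (smt (verit, best) N.scale_right_distrib N.span_scale mem_Collect_eq)
  show "\<Union> (GN ` {i..}) \<subseteq> {g + z | g z. g \<in> GN i \<and> z \<in> N.span (\<Union> (GN ` {i + 1..}))}"
  proof
    fix y assume "y \<in> \<Union> (GN ` {i..})"
    then obtain j where j: "j \<ge> i" "y \<in> GN j" by auto
    show "y \<in> {g + z | g z. g \<in> GN i \<and> z \<in> N.span (\<Union> (GN ` {i + 1..}))}"
    proof (cases "j = i")
      case True then show ?thesis using j N.span_zero by (intro CollectI exI[of _ y] exI[of _ 0]) auto
    next
      case False
      then have "y \<in> N.span (\<Union> (GN ` {i + 1..}))" using j by (intro N.span_base) auto
      then show ?thesis using N.subspace_0[OF GN_sub] by (intro CollectI exI[of _ 0] exI[of _ y]) auto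
    qed
  qed
qed

definition good :: "int \<Rightarrow> nat \<Rightarrow> ('r \<Rightarrow> nat \<Rightarrow> 'a) \<Rightarrow> ((nat \<Rightarrow> 'a) \<Rightarrow> 'r) \<Rightarrow> bool" where
  "good i n s p \<longleftrightarrow>
        (\<forall>m\<in>FR i. s m \<in> free_mod n)
      \<and> (\<forall>m\<in>FR i. \<forall>m'\<in>FR i. s (m + m') = (\<lambda>k. s m k + s m' k))
      \<and> (\<forall>x m. m \<in> FR i \<longrightarrow> s (actR (f x) m) = (\<lambda>k. x * s m k))
      \<and> (\<forall>m\<in>FR (i + 1). s m = (\<lambda>k. 0))
      \<and> (\<forall>v\<in>free_mod n. p v \<in> FR i)
      \<and> (\<forall>v\<in>free_mod n. \<forall>w\<in>free_mod n. p (\<lambda>k. v k + w k) = p v + p w)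
      \<and> (\<forall>x. \<forall>v\<in>free_mod n. p (\<lambda>k. x * v k) = actR (f x) (p v))
      \<and> (\<forall>m\<in>FR i. p (s m) - m \<in> FR (i + 1))
      \<and> (\<forall>k<n. \<phi> (p (delta k)) \<in> GN i)"

lemma delta_free: "k < n \<Longrightarrow> delta k \<in> free_mod n"
  unfolding delta_def free_mod_def by auto

lemma good_ex: "\<exists>n s p. good i n s p"
proof -
  obtain n s p where P:
        "(\<forall>m\<in>FR i. s m \<in> free_mod n)"
      "(\<forall>m\<in>FR i. \<forall>m'\<in>FR i. s (m + m') = (\<lambda>k. s m k + s m' k))"
      "(\<forall>x m. m \<in> FR i \<longrightarrow> s (actR (f x) m) = (\<lambda>k. x * s m k))"
      "(\<forall>m\<in>FR (i + 1). s m = (\<lambda>k. 0))"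
      "(\<forall>v\<in>free_mod n. p v \<in> FR i)"
      "(\<forall>v\<in>free_mod n. \<forall>w\<in>free_mod n. p (\<lambda>k. v k + w k) = p v + p w)"
      "(\<forall>x. \<forall>v\<in>free_mod n. p (\<lambda>k. x * v k) = actR (f x) (p v))"
      "(\<forall>m\<in>FR i. p (s m) - m \<in> FR (i + 1))"
    using filt_proj unfolding projective_quotient_def by blast
  have "\<exists>t. t \<in> FR (i + 1) \<and> \<phi> (p (delta k)) - \<phi> t \<in> GN i" if k: "k < n" for k
  proof -
    have "\<phi> (p (delta k)) \<in> grade_ge smB actN GN i"
      using phi_filt P(5) delta_free[OF k] by blast
    then obtain g z where gz: "g \<in> GN i" "z \<in> grade_ge smB actN GN (i + 1)" "\<phi> (p (delta k)) = g + z"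
      using grade_ge_split by blast
    obtain t where "t \<in> FR (i + 1)" "z = \<phi> t" using gz(2) phi_filt by (metis imageE)
    then show ?thesis using gz by (intro exI[of _ t]) auto
  qed
  then obtain T where T: "\<And>k. k < n \<Longrightarrow> T k \<in> FR (i + 1) \<and> \<phi> (p (delta k)) - \<phi> (T k) \<in> GN i"
    by metis
  define p' where "p' v = p v - (\<Sum>k<n. actR (f (v k)) (T k))" for v
  have TF: "(\<Sum>k<n. actR (f (v k)) (T k)) \<in> FR (i + 1)" for v
    using T by (auto intro!: FR_sum FR_act)
  have "good i n s p'"
    unfolding good_def
  proof (intro conjI)
    show "\<forall>v\<in>free_mod n. p' v \<in> FR i"
      using P(5) TF filt_dec unfolding p'_def by (auto intro!: FR_diff)
    show "\<forall>v\<in>free_mod n. \<forall>w\<in>free_mod n. p' (\<lambda>k. v k + w k) = p' v + p' w"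
      using P(6) unfolding p'_def by (simp add: f_add aR sum.distrib)
    show "\<forall>x. \<forall>v\<in>free_mod n. p' (\<lambda>k. x * v k) = actR (f x) (p' v)"
      using P(7) unfolding p'_def by (simp add: f_mult aR Am_sumr[OF R_mod])
    show "\<forall>m\<in>FR i. p' (s m) - m \<in> FR (i + 1)"
    proof
      fix m assume "m \<in> FR i"
      then have "p (s m) - m - (\<Sum>k<n. actR (f (s m k)) (T k)) \<in> FR (i + 1)"
        using P(8) TF \<open>m \<in> FR i\<close> by (blast intro: FR_diff)
      moreover have "p' (s m) - m = p (s m) - m - (\<Sum>k<n. actR (f (s m k)) (T k))"
        unfolding p'_def by (simp add: algebra_simps)
      ultimately show "p' (s m) - m \<in> FR (i + 1)" by (simp add: diff_diff_eq add.commute)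
    qed
    show "\<forall>k<n. \<phi> (p' (delta k)) \<in> GN i"
    proof (intro allI impI)
      fix k assume k: "k < n"
      have "(\<Sum>k'<n. actR (f (delta k k')) (T k')) = (\<Sum>k'<n. if k' = k then T k else 0)"
        by (rule sum.cong) (auto simp: delta_def aR)
      also have "\<dots> = T k" using k by simp
      finally show "\<phi> (p' (delta k)) \<in> GN i" using T[OF k] unfolding p'_def by (simp add: phi_diff)
    qed
  qed (use P(1,2,3,4) in \<open>simp_all\<close>)
  then show ?thesis by blast
qed

end



lemma free_mod_add: "v \<in> free_mod n \<Longrightarrow> w \<in> free_mod n \<Longrightarrow> (\<lambda>k. v k + w k) \<in> free_mod n"
  and free_mod_mult: "v \<in> free_mod n \<Longrightarrow> (\<lambda>k. x * v k) \<in> free_mod n"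
  and free_mod_zero: "(\<lambda>k. 0) \<in> free_mod n"
  unfolding free_mod_def by auto

context gradedA begin
lemma free_mod_dec': "v \<in> free_mod n \<Longrightarrow> (\<lambda>k. dec ga (v k) j) \<in> free_mod n"
  unfolding free_mod_def by auto
end

locale lev = ctx smA ga smB f actR FR actN GN \<phi>
  for smA :: "'k::field \<Rightarrow> 'a::ring_1 \<Rightarrow> 'a" and ga smB f
    and actR :: "'b::ring_1 \<Rightarrow> 'r::ab_group_add \<Rightarrow> 'r" and FR
    and actN :: "'b \<Rightarrow> 'n::ab_group_add \<Rightarrow> 'n" and GN \<phi> +
  fixes i :: int and n :: nat and s :: "'r \<Rightarrow> nat \<Rightarrow> 'a" and p :: "(nat \<Rightarrow> 'a) \<Rightarrow> 'r"
  assumes gd: "good i n s p"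
begin

lemma s_free: "m \<in> FR i \<Longrightarrow> s m \<in> free_mod n"
  and s_add: "m \<in> FR i \<Longrightarrow> m' \<in> FR i \<Longrightarrow> s (m + m') = (\<lambda>k. s m k + s m' k)"
  and s_act: "m \<in> FR i \<Longrightarrow> s (actR (f x) m) = (\<lambda>k. x * s m k)"
  and s_van: "m \<in> FR (i + 1) \<Longrightarrow> s m = (\<lambda>k. 0)"
  and p_in: "v \<in> free_mod n \<Longrightarrow> p v \<in> FR i"
  and p_add: "v \<in> free_mod n \<Longrightarrow> w \<in> free_mod n \<Longrightarrow> p (\<lambda>k. v k + w k) = p v + p w"
  and p_act: "v \<in> free_mod n \<Longrightarrow> p (\<lambda>k. x * v k) = actR (f x) (p v)"
  and p_sm: "m \<in> FR i \<Longrightarrow> p (s m) - m \<in> FR (i + 1)"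
  and p_phi: "k < n \<Longrightarrow> \<phi> (p (delta k)) \<in> GN i"
  using gd unfolding good_def by auto

lemma s_zero: "s 0 = (\<lambda>k. 0)"
proof -
  have "s 0 = (\<lambda>k. s 0 k + s 0 k)" using s_add[of 0 0] by simp
  then have "s 0 k = 0" for k by (metis add_cancel_left_left)
  then show ?thesis by auto
qed

lemma s_diff: "m \<in> FR i \<Longrightarrow> m' \<in> FR i \<Longrightarrow> s (m - m') k = s m k - s m' k"
proof -
  assume a: "m \<in> FR i" "m' \<in> FR i"
  have "s m = s ((m - m') + m')" by simp
  also have "\<dots> = (\<lambda>k. s (m - m') k + s m' k)" using a by (intro s_add FR_diff) auto
  finally show ?thesis by (metis add_diff_cancel)
qed

lemma s_sum: "(\<And>j. j \<in> J \<Longrightarrow> g j \<in> FR i) \<Longrightarrow> s (sum g J) k = (\<Sum>j\<in>J. s (g j) k)"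
proof (induct J rule: infinite_finite_induct)
  case (insert x F)
  then show ?case by (simp add: s_add FR_sum)
qed (simp_all add: s_zero)

lemma p_zero: "p (\<lambda>k. 0) = 0"
  using p_add[OF free_mod_zero free_mod_zero] by simp

lemma p_dec: "v \<in> free_mod n \<Longrightarrow> p v = (\<Sum>k<n. actR (f (v k)) (p (delta k)))"
proof -
  assume v: "v \<in> free_mod n"
  have "p (\<lambda>l. if l < N then v l else 0) = (\<Sum>k<N. actR (f (v k)) (p (delta k)))" if "N \<le> n" for N
    using that
  proof (induct N)
    case 0 then show ?case by (simp add: p_zero)
  next
    case (Suc N)
    have fm1: "(\<lambda>l. if l < N then v l else 0) \<in> free_mod n" using Suc(2) unfolding free_mod_def by auto
    have fm2: "(\<lambda>l. v N * delta N l) \<in> free_mod n"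
      using Suc(2) delta_free[of N n] by (intro free_mod_mult) auto
    have "(\<lambda>l. if l < Suc N then v l else 0) = (\<lambda>l. (if l < N then v l else 0) + v N * delta N l)"
      by (auto simp: delta_def less_Suc_eq)
    then have "p (\<lambda>l. if l < Suc N then v l else 0) = p (\<lambda>l. if l < N then v l else 0) + p (\<lambda>l. v N * delta N l)"
      using p_add[OF fm1 fm2] by simp
    also have "p (\<lambda>l. v N * delta N l) = actR (f (v N)) (p (delta N))"
    proof -
      have "delta N \<in> free_mod n" using Suc(2) by (intro delta_free) simp
      from p_act[OF this, of "v N"] show ?thesis .
    qed
    finally have eq: "p (\<lambda>l. if l < Suc N then v l else 0) = p (\<lambda>l. if l < N then v l else 0) + actR (f (v N)) (p (delta N))" .
    have IH: "p (\<lambda>l. if l < N then v l else 0) = (\<Sum>k<N. actR (f (v k)) (p (delta k)))"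
      using Suc(1) Suc(2) by simp
    show ?case unfolding eq IH by simp
  qed
  moreover have "(\<lambda>l. if l < n then v l else 0) = v"
    using v unfolding free_mod_def by (auto simp: not_less)
  ultimately show ?thesis by (metis order_refl)
qed

definition e :: "'r \<Rightarrow> nat \<Rightarrow> 'a" where "e m = (\<lambda>k. dec ga (s m k) 0)"

lemma e_free: "m \<in> FR i \<Longrightarrow> e m \<in> free_mod n"
  unfolding e_def using s_free free_mod_dec' by blast

lemma e_add: "m \<in> FR i \<Longrightarrow> m' \<in> FR i \<Longrightarrow> e (m + m') = (\<lambda>k. e m k + e m' k)"
  unfolding e_def by (simp add: s_add dec_add)

lemma e_diff: "m \<in> FR i \<Longrightarrow> m' \<in> FR i \<Longrightarrow> e (m - m') k = e m k - e m' k"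
  unfolding e_def by (simp add: s_diff dec_diff)

lemma e_act0: "m \<in> FR i \<Longrightarrow> x \<in> ga 0 \<Longrightarrow> e (actR (f x) m) = (\<lambda>k. x * e m k)"
  unfolding e_def by (simp add: s_act dec_mult0)

abbreviation "rad \<equiv> rad_flat smA ga smB f actR (FR i)"
abbreviation "U \<equiv> set_plus (FR (i + 1)) rad"

lemma rad_FR: "rad \<subseteq> FR i"
  unfolding rad_flat_def by (rule R.span_minimal[OF _ FR_subspace]) (auto intro: FR_act)

lemma e_rad': "r \<in> rad \<Longrightarrow> r \<in> FR i \<and> e r = (\<lambda>k. 0)"
proof -
  assume "r \<in> rad"
  then show ?thesis unfolding rad_flat_def
  proof (induct rule: R.span_induct_alt)
    case base then show ?case unfolding e_def by (simp add: s_zero)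
  next
    case (step c g y)
    then obtain x m where g: "g = actR (f x) m" "x \<in> a_ge smA ga 1" "m \<in> FR i" by auto
    have yF: "y \<in> FR i" using step(2) by auto
    have gF: "kR c g \<in> FR i" using g by (auto intro: FR_kR FR_act)
    have "kR c g = actR (f (smA c 1 * x)) m" using g by (simp add: kR_def' f_mult aR)
    then have "e (kR c g) = (\<lambda>k. 0)" unfolding e_def
      using g a_ge_dec[of "smA c 1 * x" 1] a_ge_mult[OF ga_a_ge[OF smA1_ga0, of 0] g(2)]
      by (simp add: s_act)
    then show ?case using e_add[OF gF yF] step gF yF by (simp add: FR_add)
  qed
qed

lemma e_rad: "r \<in> rad \<Longrightarrow> e r = (\<lambda>k. 0)" using e_rad' by blast

lemma U_FR: "U \<subseteq> FR i"
  unfolding set_plus_def using rad_FR filt_dec by (auto intro: FR_add)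

lemma e_U: "u \<in> U \<Longrightarrow> e u = (\<lambda>k. 0)"
proof -
  assume "u \<in> U"
  then obtain a r where ar: "u = a + r" "a \<in> FR (i + 1)" "r \<in> rad" unfolding set_plus_def by auto
  have "e a = (\<lambda>k. 0)" unfolding e_def using s_van[OF ar(2)] by simp
  then show ?thesis using ar e_rad[OF ar(3)] e_add[of a r] rad_FR filt_dec by auto
qed

lemma p_pos: "v \<in> free_mod n \<Longrightarrow> (\<And>k. v k \<in> a_ge smA ga 1) \<Longrightarrow> p v \<in> rad"
  unfolding p_dec rad_flat_def
  by (intro R.span_sum R.span_base) (use p_in delta_free in blast)

lemma pe_U: "m \<in> FR i \<Longrightarrow> p (e m) - m \<in> U"
proof -
  assume m: "m \<in> FR i"
  define w where "w = (\<lambda>k. s m k - dec ga (s m k) 0)"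
  have wf: "w \<in> free_mod n" using s_free[OF m] unfolding w_def free_mod_def by auto
  have "s m = (\<lambda>k. e m k + w k)" unfolding w_def e_def by auto
  then have "p (s m) = p (e m) + p w" using p_add[OF e_free[OF m] wf] by simp
  then have "p (e m) - m = (p (s m) - m) + (- p w)" by (simp add: algebra_simps)
  moreover have "- p w \<in> rad" unfolding rad_flat_def
    by (rule R.span_neg, fold rad_flat_def, rule p_pos[OF wf]) (simp only: w_def, rule minus_dec0_a_ge1)
  ultimately show ?thesis unfolding set_plus_def using p_sm[OF m] by blast
qed

lemma e_pe: "m \<in> FR i \<Longrightarrow> e (p (e m)) = e m"
proof -
  assume m: "m \<in> FR i"
  have "e (p (e m) - m) k = 0" for k using e_U[OF pe_U[OF m]] by simp
  then have "e (p (e m)) k = e m k" for k using e_diff[OF p_in[OF e_free[OF m]] m] by simp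
  then show ?thesis by auto
qed

definition h :: "'r set" where "h = p ` (e ` FR i)"

lemma h_FR: "h \<subseteq> FR i" unfolding h_def using p_in e_free by auto

lemma h_fix: "m \<in> h \<Longrightarrow> p (e m) = m"
  unfolding h_def using e_pe by auto

lemma h_0: "0 \<in> h"
proof -
  have "e 0 = (\<lambda>k. 0)" unfolding e_def by (simp add: s_zero)
  then show ?thesis unfolding h_def using p_zero by (metis FR_0 image_eqI)
qed

lemma h_submod: "submod actR (f ` ga 0) h"
  unfolding submod_def
proof (intro conjI ballI)
  show "0 \<in> h" by (rule h_0)
  fix x y assume "x \<in> h" "y \<in> h"
  then obtain a b where ab: "a \<in> FR i" "b \<in> FR i" "x = p (e a)" "y = p (e b)" unfolding h_def by auto
  then have "x + y = p (e (a + b))" using p_add[OF e_free e_free] e_add by simp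
  then show "x + y \<in> h" unfolding h_def using ab FR_add by blast
next
  fix c x assume "c \<in> f ` ga 0" "x \<in> h"
  then obtain y a where ya: "y \<in> ga 0" "c = f y" "a \<in> FR i" "x = p (e a)" unfolding h_def by auto
  then have "actR c x = p (e (actR (f y) a))" using p_act[OF e_free] e_act0 by simp
  then show "actR c x \<in> h" unfolding h_def using ya FR_act by blast
qed

lemma h_inter: "h \<inter> U = {0}"
proof
  show "h \<inter> U \<subseteq> {0}"
  proof
    fix x assume "x \<in> h \<inter> U"
    then obtain a where a: "a \<in> FR i" "x = p (e a)" "x \<in> U" unfolding h_def by auto
    then have "e a = (\<lambda>k. 0)" using e_U e_pe by metis
    then show "x \<in> {0}" using a p_zero by simp
  qed
  have "(0::'r) \<in> U" unfolding set_plus_def rad_flat_def using R.span_zero FR_0 by force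
  then show "{0} \<subseteq> h \<inter> U" using h_0 by auto
qed

lemma h_sum: "set_plus h U = FR i"
proof
  show "set_plus h U \<subseteq> FR i"
  proof
    fix z assume "z \<in> set_plus h U"
    then obtain a b where "z = a + b" "a \<in> h" "b \<in> U" by (auto simp: set_plus_def)
    then show "z \<in> FR i" using h_FR U_FR FR_add by blast
  qed
  show "FR i \<subseteq> set_plus h U"
  proof
    fix m assume m: "m \<in> FR i"
    have "p (e m) - m \<in> U" by (rule pe_U[OF m])
    then obtain a r where ar: "p (e m) - m = a + r" "a \<in> FR (i + 1)" "r \<in> rad"
      unfolding set_plus_def by auto
    have "m = p (e m) + ((- a) + (- r))" using ar(1) by (simp add: algebra_simps)
    moreover have "(- a) + (- r) \<in> U" unfolding set_plus_def
      using ar FR_neg R.span_neg unfolding rad_flat_def by blast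
    moreover have "p (e m) \<in> h" unfolding h_def using m by blast
    ultimately show "m \<in> set_plus h U" unfolding set_plus_def by blast
  qed
qed

lemma h_phi: "\<phi> ` h \<subseteq> GN i"
proof
  fix y assume "y \<in> \<phi> ` h"
  then obtain a where a: "a \<in> FR i" "y = \<phi> (p (e a))" unfolding h_def by auto
  have "y = (\<Sum>k<n. actN (f (e a k)) (\<phi> (p (delta k))))"
    using a p_dec[OF e_free[OF a(1)]] by (simp add: phi_sum phi_act)
  also have "\<dots> \<in> GN i"
  proof (intro N.subspace_sum[OF GN_sub])
    fix k assume "k \<in> {..<n}"
    then show "actN (f (e a k)) (\<phi> (p (delta k))) \<in> GN i"
      using N_grad[OF dec_spec(2)[of "s a k" 0] p_phi[of k]] unfolding e_def by simp
  qed
  finally show "y \<in> GN i" .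
qed

definition Y :: "nat \<Rightarrow> 'r set" where
  "Y j = R.span {actR (f x) m | x m. x \<in> ga j \<and> m \<in> h}"

lemma Y_props:
  assumes "y \<in> Y j"
  shows "y \<in> FR i \<and> (\<forall>k d. d < j \<longrightarrow> dec ga (s y k) d = 0) \<and> p (\<lambda>k. dec ga (s y k) j) = y"
  using assms unfolding Y_def
proof (induct rule: R.span_induct_alt)
  case base then show ?case by (simp add: s_zero p_zero)
next
  case (step c g y)
  then obtain x m where g: "g = actR (f x) m" "x \<in> ga j" "m \<in> h" by auto
  have mF: "m \<in> FR i" using g h_FR by auto
  define x' where "x' = smA c 1 * x"
  have x': "x' \<in> ga j" unfolding x'_def using g(2) ga_scale smA_mult1 by metis
  have kg: "kR c g = actR (f x') m" using g by (simp add: x'_def kR_def' f_mult aR)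
  have gF: "kR c g \<in> FR i" using kg mF FR_act by simp
  have yF: "y \<in> FR i" using step by auto
  have s1: "s (kR c g + y) = (\<lambda>k. x' * s m k + s y k)"
    using s_add[OF gF yF] kg s_act[OF mF] by simp
  have low: "\<forall>k d. d < j \<longrightarrow> dec ga (s (kR c g + y) k) d = 0"
    using s1 step by (simp add: dec_add dec_mult[OF x'])
  have "(\<lambda>k. dec ga (s (kR c g + y) k) j) = (\<lambda>k. x' * e m k + dec ga (s y k) j)"
    using s1 by (simp add: dec_add dec_mult[OF x'] e_def)
  moreover have "p (\<lambda>k. x' * e m k + dec ga (s y k) j) = actR (f x') m + y"
  proof -
    have f1: "(\<lambda>k. x' * e m k) \<in> free_mod n" using e_free[OF mF] by (rule free_mod_mult)
    have f2: "(\<lambda>k. dec ga (s y k) j) \<in> free_mod n" using s_free[OF yF] by (rule free_mod_dec')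
    have "p (\<lambda>k. x' * e m k + dec ga (s y k) j) = p (\<lambda>k. x' * e m k) + p (\<lambda>k. dec ga (s y k) j)"
      using p_add[OF f1 f2] by simp
    also have "\<dots> = actR (f x') m + y"
      using p_act[OF e_free[OF mF]] h_fix[OF g(3)] step by simp
    finally show ?thesis .
  qed
  ultimately show ?case using low gF yF kg by (simp add: FR_add)
qed

end



context module begin

lemma span_UN_decomp:
  assumes "x \<in> span (\<Union>i\<in>I. S i)"
  shows "\<exists>F g. finite F \<and> F \<subseteq> I \<and> (\<forall>i\<in>F. g i \<in> span (S i)) \<and> x = sum g F"
  using assms
proof (induct rule: span_induct_alt)
  case base then show ?case by (intro exI[of _ "{}"]) auto
next
  case (step c x y)
  then obtain i where i: "i \<in> I" "x \<in> S i" by auto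
  from step obtain F g where Fg: "finite F" "F \<subseteq> I" "\<forall>i\<in>F. g i \<in> span (S i)" "y = sum g F" by auto
  define g' where "g' = g(i := (if i \<in> F then g i else 0) + c *s x)"
  have "c *s x + y = sum g' (insert i F)"
  proof (cases "i \<in> F")
    case True
    then have "sum g' (insert i F) = g' i + sum g' (F - {i})"
      using Fg(1) by (simp add: insert_absorb sum.remove)
    also have "sum g' (F - {i}) = sum g (F - {i})" unfolding g'_def by (rule sum.cong) auto
    finally show ?thesis using True Fg(1,4) by (simp add: g'_def sum.remove add.commute add.left_commute)
  next
    case False
    then have "sum g' (insert i F) = g' i + sum g' F" using Fg(1) by simp
    also have "sum g' F = sum g F" unfolding g'_def using False by (intro sum.cong) auto
    finally show ?thesis using False Fg(4) by (simp add: g'_def)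
  qed
  moreover have "\<forall>j\<in>insert i F. g' j \<in> span (S j)"
  proof
    fix j assume j: "j \<in> insert i F"
    have "(if i \<in> F then g i else 0) \<in> span (S i)" using Fg(3) span_zero by auto
    moreover have "c *s x \<in> span (S i)" using i span_scale span_base by blast
    ultimately have "g' i \<in> span (S i)" unfolding g'_def by (simp add: span_add)
    then show "g' j \<in> span (S j)" using j Fg(3) unfolding g'_def by (cases "j = i") auto
  qed
  ultimately show ?case using Fg i by (intro exI[of _ "insert i F"] exI[of _ g']) auto
qed

lemma subspace_set_plus: "subspace S \<Longrightarrow> subspace T \<Longrightarrow> subspace (set_plus S T)"
  unfolding set_plus_def
  apply (intro subspaceI)
  apply (metis (mono_tags, lifting) add_0 mem_Collect_eq subspace_0)
   apply (smt (verit, best) add.assoc add.left_commute mem_Collect_eq subspace_add)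
  by (smt (verit, best) mem_Collect_eq scale_right_distrib subspace_scale)

end

context ctx begin

definition trip :: "int \<Rightarrow> nat \<times> ('r \<Rightarrow> nat \<Rightarrow> 'a) \<times> ((nat \<Rightarrow> 'a) \<Rightarrow> 'r)" where
  "trip i = (SOME t. good i (fst t) (fst (snd t)) (snd (snd t)))"

abbreviation "nI i \<equiv> fst (trip i)"
abbreviation "sI i \<equiv> fst (snd (trip i))"
abbreviation "pI i \<equiv> snd (snd (trip i))"

lemma good_trip: "good i (nI i) (sI i) (pI i)"
proof -
  obtain n s p where "good i n s p" using good_ex by blast
  then have "\<exists>t. good i (fst t) (fst (snd t)) (snd (snd t))" by (intro exI[of _ "(n, s, p)"]) simp
  then show ?thesis unfolding trip_def by (rule someI_ex)
qed

lemma lev_i: "lev smA ga smB f actR FR actN GN \<phi> i (nI i) (sI i) (pI i)"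
  by (intro lev.intro ctx_axioms lev_axioms.intro good_trip)

definition hh :: "int \<Rightarrow> 'r set" where
  "hh i = pI i ` ((\<lambda>m k. dec ga (sI i m k) 0) ` FR i)"

definition YY :: "int \<Rightarrow> nat \<Rightarrow> 'r set" where
  "YY i j = R.span {actR (f x) m | x m. x \<in> ga j \<and> m \<in> hh i}"

lemma hh_eq: "lev.h ga FR i (sI i) (pI i) = hh i"
  unfolding lev.h_def[OF lev_i] lev.e_def[OF lev_i] hh_def ..

end



context ctx begin

lemma YY_props:
  assumes "y \<in> YY i j"
  shows "y \<in> FR i \<and> (\<forall>k d. d < j \<longrightarrow> dec ga (sI i y k) d = 0) \<and> pI i (\<lambda>k. dec ga (sI i y k) j) = y"
proof -
  interpret L: lev smA ga smB f actR FR actN GN \<phi> i "nI i" "sI i" "pI i" by (rule lev_i)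
  have "L.Y j = YY i j" unfolding L.Y_def YY_def hh_eq ..
  then have "y \<in> L.Y j" using assms by simp
  from L.Y_props[OF this] show ?thesis .
qed

lemma YY_FR: "YY i j \<subseteq> FR i" using YY_props by blast

lemma KL:
  assumes F: "finite F" and Y: "\<forall>q\<in>F. y q \<in> YY (fst q) (snd q)" and S: "sum y F = 0"
  shows "\<forall>q\<in>F. y q = 0"
proof (rule ccontr)
  assume "\<not> (\<forall>q\<in>F. y q = 0)"
  define F' where "F' = {q \<in> F. y q \<noteq> 0}"
  have F'ne: "F' \<noteq> {}" using \<open>\<not> _\<close> unfolding F'_def by auto
  have fF': "finite F'" using F unfolding F'_def by auto
  have "sum y F = sum y F'"
    by (rule sum.mono_neutral_right[OF F]) (auto simp: F'_def)
  then have S': "sum y F' = 0" using S by simp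
  define i0 where "i0 = Min (fst ` F')"
  have i0_le: "q \<in> F' \<Longrightarrow> i0 \<le> fst q" for q unfolding i0_def using fF' by auto
  have "i0 \<in> fst ` F'" unfolding i0_def using fF' F'ne by auto
  define J where "J = {j. (i0, j) \<in> F'}"
  have "J \<subseteq> snd ` F'" unfolding J_def by force
  then have fJ: "finite J" using fF' finite_subset by blast
  have Jne: "J \<noteq> {}" unfolding J_def using \<open>i0 \<in> fst ` F'\<close> by force
  define j0 where "j0 = Min J"
  have j0J: "(i0, j0) \<in> F'" using Min_in[OF fJ Jne] unfolding j0_def J_def by simp
  have j0_le: "(i0, j) \<in> F' \<Longrightarrow> j0 \<le> j" for j unfolding j0_def using fJ J_def by auto
  define F0 where "F0 = {q \<in> F'. fst q = i0}"
  have fF0: "finite F0" using fF' unfolding F0_def by auto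
  have "sum y F' = sum y F0 + sum y (F' - F0)"
    using sum.subset_diff[of F0 F' y] fF' unfolding F0_def by (simp add: add.commute)
  then have A: "sum y F0 = - sum y (F' - F0)" using S' by (simp add: eq_neg_iff_add_eq_0)
  have "sum y (F' - F0) \<in> FR (i0 + 1)"
  proof (rule FR_sum)
    fix q assume q: "q \<in> F' - F0"
    then have "q \<in> F'" "fst q \<noteq> i0" unfolding F0_def by auto
    then have "i0 + 1 \<le> fst q" using i0_le[of q] by linarith
    moreover have "y q \<in> FR (fst q)" using q Y YY_FR unfolding F'_def by blast
    ultimately show "y q \<in> FR (i0 + 1)" using FR_mono by blast
  qed
  then have AF: "sum y F0 \<in> FR (i0 + 1)" unfolding A by (rule FR_neg)
  interpret L: lev smA ga smB f actR FR actN GN \<phi> i0 "nI i0" "sI i0" "pI i0" by (rule lev_i)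
  have yF: "q \<in> F0 \<Longrightarrow> y q \<in> FR i0" for q using Y YY_FR unfolding F0_def F'_def by force
  have zero: "dec ga (sI i0 (y (i0, j0)) k) j0 = 0" for k
  proof -
    have "0 = dec ga (sI i0 (sum y F0) k) j0" using L.s_van[OF AF] by simp
    also have "\<dots> = (\<Sum>q\<in>F0. dec ga (sI i0 (y q) k) j0)" using yF by (simp add: L.s_sum dec_sum)
    also have "\<dots> = dec ga (sI i0 (y (i0, j0)) k) j0 + (\<Sum>q\<in>F0 - {(i0, j0)}. dec ga (sI i0 (y q) k) j0)"
    proof -
      have "(i0, j0) \<in> F0" using j0J unfolding F0_def by simp
      from sum.remove[OF fF0 this] show ?thesis .
    qed
    also have "(\<Sum>q\<in>F0 - {(i0, j0)}. dec ga (sI i0 (y q) k) j0) = 0"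
    proof (rule sum.neutral, rule ballI)
      fix q assume q: "q \<in> F0 - {(i0, j0)}"
      then obtain j where qj: "q = (i0, j)" "(i0, j) \<in> F'" unfolding F0_def by (cases q) auto
      then have "j0 < j" using j0_le[OF qj(2)] q by auto
      moreover have "y q \<in> YY i0 j" using Y qj unfolding F'_def by auto
      ultimately show "dec ga (sI i0 (y q) k) j0 = 0" using YY_props qj by auto
    qed
    finally show ?thesis by simp
  qed
  have "y (i0, j0) \<in> YY i0 j0" using Y j0J unfolding F'_def by auto
  then have "y (i0, j0) = pI i0 (\<lambda>k. dec ga (sI i0 (y (i0, j0)) k) j0)" using YY_props by auto
  also have "\<dots> = 0" using zero L.p_zero by simp
  finally show False using j0J unfolding F'_def by auto
qed

abbreviation "Rg \<equiv> grading_from ga smB f actR hh"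

lemma Rg_eq: "Rg n = R.span (\<Union>i\<in>{..n}. {actR (f x) m | x m. x \<in> ga (nat (n - i)) \<and> m \<in> hh i})"
  unfolding grading_from_def by (rule arg_cong[where f = R.span]) auto

lemma Rg_decomp:
  assumes "r \<in> Rg n"
  shows "\<exists>F g. finite F \<and> F \<subseteq> {..n} \<and> (\<forall>i\<in>F. g i \<in> YY i (nat (n - i))) \<and> r = sum g F"
  unfolding YY_def by (rule R.span_UN_decomp[OF assms[unfolded Rg_eq]])

lemma IR:
  assumes D: "finite D" and r: "\<forall>n\<in>D. r n \<in> Rg n" and S: "sum r D = 0"
  shows "\<forall>n\<in>D. r n = 0"
proof -
  have "\<forall>n\<in>D. \<exists>Fg. finite (fst Fg) \<and> fst Fg \<subseteq> {..n} \<and> (\<forall>i\<in>fst Fg. snd Fg i \<in> YY i (nat (n - i))) \<and> r n = sum (snd Fg) (fst Fg)"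
    using Rg_decomp r by fastforce
  from bchoice[OF this] obtain Fg where Fg0: "\<forall>n\<in>D. finite (fst (Fg n)) \<and> fst (Fg n) \<subseteq> {..n}
      \<and> (\<forall>i\<in>fst (Fg n). snd (Fg n) i \<in> YY i (nat (n - i))) \<and> r n = sum (snd (Fg n)) (fst (Fg n))"
    by blast
  then have Fg: "\<And>n. n \<in> D \<Longrightarrow> finite (fst (Fg n)) \<and> fst (Fg n) \<subseteq> {..n}
      \<and> (\<forall>i\<in>fst (Fg n). snd (Fg n) i \<in> YY i (nat (n - i))) \<and> r n = sum (snd (Fg n)) (fst (Fg n))"
    by blast
  define FF where "FF n = fst (Fg n)" for n
  define g where "g n = snd (Fg n)" for n
  define Sg where "Sg = Sigma D FF"
  define tau :: "int \<times> int \<Rightarrow> int \<times> nat" where "tau = (\<lambda>(n, i). (i, nat (n - i)))"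
  define y where "y q = g (fst q + int (snd q)) (fst q)" for q
  have fSg: "finite Sg" unfolding Sg_def using D Fg FF_def by auto
  have inj: "inj_on tau Sg"
  proof (rule inj_onI)
    fix a b assume "a \<in> Sg" "b \<in> Sg" "tau a = tau b"
    obtain n i n' i' where ab: "a = (n, i)" "b = (n', i')" by (cases a, cases b) auto
    have "i \<le> n" "i' \<le> n'" using \<open>a \<in> Sg\<close> \<open>b \<in> Sg\<close> ab Fg unfolding Sg_def FF_def by auto
    moreover have "i = i'" "nat (n - i) = nat (n' - i')" using \<open>tau a = tau b\<close> ab unfolding tau_def by auto
    ultimately show "a = b" using ab by auto
  qed
  have y_tau: "y (tau q) = g (fst q) (snd q)" if "q \<in> Sg" for q
    using that Fg unfolding Sg_def tau_def y_def FF_def by (cases q) auto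
  have "sum r D = (\<Sum>n\<in>D. sum (g n) (FF n))" using Fg unfolding g_def FF_def by simp
  also have "\<dots> = (\<Sum>q\<in>Sg. g (fst q) (snd q))" unfolding Sg_def
    by (subst sum.Sigma) (use D Fg FF_def in \<open>auto simp: split_def\<close>)
  also have "\<dots> = (\<Sum>q\<in>Sg. y (tau q))" using y_tau by simp
  also have "\<dots> = sum y (tau ` Sg)" by (simp add: sum.reindex[OF inj])
  finally have sy: "sum y (tau ` Sg) = 0" using S by simp
  have Yy: "\<forall>q\<in>tau ` Sg. y q \<in> YY (fst q) (snd q)"
  proof
    fix q assume "q \<in> tau ` Sg"
    then obtain a where a: "a \<in> Sg" "q = tau a" by auto
    then show "y q \<in> YY (fst q) (snd q)"
      using y_tau[OF a(1)] Fg unfolding Sg_def tau_def FF_def g_def by (cases a) auto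
  qed
  have z: "\<forall>q\<in>tau ` Sg. y q = 0" by (rule KL[OF finite_imageI[OF fSg] Yy sy])
  show ?thesis
  proof
    fix n assume n: "n \<in> D"
    have "r n = sum (g n) (FF n)" using Fg[OF n] unfolding g_def FF_def by simp
    also have "\<dots> = 0"
    proof (rule sum.neutral, rule ballI)
      fix i assume "i \<in> FF n"
      then have "(n, i) \<in> Sg" unfolding Sg_def using n by auto
      then show "g n i = 0" using z y_tau by force
    qed
    finally show "r n = 0" .
  qed
qed

end



context ctx begin

lemma Rg_sub: "R.subspace (Rg n)" unfolding grading_from_def by simp

lemma Rg_span: "R.span (Rg n) = Rg n" unfolding grading_from_def by (rule R.span_span)

lemma hh_Rg: "m \<in> hh i \<Longrightarrow> m \<in> Rg i"
  unfolding grading_from_def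
  by (rule R.span_base) (use one0 in \<open>auto intro!: exI[of _ 1] exI[of _ i] simp: aR\<close>)

lemma act_Rg: "x \<in> ga j \<Longrightarrow> m \<in> Rg n \<Longrightarrow> actR (f x) m \<in> Rg (int j + n)"
proof -
  assume x: "x \<in> ga j" assume "m \<in> Rg n"
  then show ?thesis unfolding grading_from_def
  proof (induct rule: R.span_induct_alt)
    case base then show ?case by (simp add: aR R.span_zero)
  next
    case (step c g y)
    then obtain x' m' i' where g: "g = actR (f x') m'" "i' \<le> n" "x' \<in> ga (nat (n - i'))" "m' \<in> hh i'" by auto
    have "actR (f x) g = actR (f (x * x')) m'" using g by (simp add: f_mult aR)
    moreover have "x * x' \<in> ga (nat (int j + n - i'))"
    proof -
      have "j + nat (n - i') = nat (int j + n - i')" using g(2) by linarith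
      then show ?thesis using gmul[OF x g(3)] by simp
    qed
    ultimately have "actR (f x) g \<in> R.span {actR (f x) m | x m i. i \<le> int j + n \<and> x \<in> ga (nat (int j + n - i)) \<and> m \<in> hh i}"
      using g(2,4) by (intro R.span_base CollectI exI[of _ "x * x'"] exI[of _ m'] exI[of _ i']) auto
    then show ?case using step by (simp add: aR actR_kR R.span_add R.span_scale)
  qed
qed

definition SS :: "int \<Rightarrow> 'r set" where "SS i = grade_ge smB actR Rg i"

lemma SS_span: "SS i = R.span (\<Union>n\<in>{i..}. Rg n)" unfolding SS_def grade_ge_def ..

lemma SS_mono: "i \<le> i' \<Longrightarrow> SS i' \<subseteq> SS i"
  unfolding SS_span by (rule R.span_mono) (auto intro: order_trans)

lemma Rg_SS: "n \<ge> i \<Longrightarrow> m \<in> Rg n \<Longrightarrow> m \<in> SS i"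
  unfolding SS_span by (rule R.span_base) auto

lemma act_SS: "x \<in> ga d \<Longrightarrow> w \<in> SS i \<Longrightarrow> actR (f x) w \<in> SS (i + int d)"
proof -
  assume x: "x \<in> ga d" assume "w \<in> SS i"
  then show ?thesis unfolding SS_span
  proof (induct rule: R.span_induct_alt)
    case base then show ?case by (simp add: aR R.span_zero)
  next
    case (step c g y)
    then obtain n where "n \<ge> i" "g \<in> Rg n" by auto
    then have "actR (f x) g \<in> R.span (\<Union>n\<in>{i + int d..}. Rg n)"
      using act_Rg[OF x] by (intro R.span_base) force
    then show ?case using step by (simp add: aR actR_kR R.span_add R.span_scale)
  qed
qed

lemma act_SS_ge: "x \<in> a_ge smA ga t \<Longrightarrow> w \<in> SS i \<Longrightarrow> actR (f x) w \<in> SS (i + int t)"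
proof -
  assume w: "w \<in> SS i" assume "x \<in> a_ge smA ga t"
  then show ?thesis unfolding a_ge_def
  proof (induct rule: A.span_induct_alt)
    case base then show ?case by (simp add: aR SS_span R.span_zero)
  next
    case (step c x z)
    then obtain d where d: "d \<ge> t" "x \<in> ga d" by auto
    have "actR (f x) w \<in> SS (i + int t)" using act_SS[OF d(2) w] SS_mono[of "i + int t" "i + int d"] d by auto
    moreover have "actR (f (smA c x + z)) w = kR c (actR (f x) w) + actR (f z) w"
      by (simp add: f_add f_scale aR kscale_def smB_mult1[of c "f x"])
    ultimately show ?case using step unfolding SS_span by (simp add: R.span_add R.span_scale)
  qed
qed

lemma SS_sub: "R.subspace (SS i)" unfolding SS_span by simp

definition TT :: "int \<Rightarrow> nat \<Rightarrow> 'r set" where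
  "TT i t = R.span {actR (f x) m | x m. x \<in> a_ge smA ga t \<and> m \<in> FR i}"

lemma act_rad: "x \<in> a_ge smA ga t \<Longrightarrow> r \<in> rad_flat smA ga smB f actR (FR i) \<Longrightarrow> actR (f x) r \<in> TT i (Suc t)"
proof -
  assume x: "x \<in> a_ge smA ga t" assume "r \<in> rad_flat smA ga smB f actR (FR i)"
  then show ?thesis unfolding rad_flat_def
  proof (induct rule: R.span_induct_alt)
    case base then show ?case by (simp add: aR TT_def R.span_zero)
  next
    case (step c g y)
    then obtain x' m where g: "g = actR (f x') m" "x' \<in> a_ge smA ga 1" "m \<in> FR i" by auto
    have "actR (f x) g = actR (f (x * x')) m" using g by (simp add: f_mult aR)
    moreover have "x * x' \<in> a_ge smA ga (Suc t)" using a_ge_mult[OF x g(2)] by simp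
    ultimately have "actR (f x) g \<in> TT i (Suc t)" unfolding TT_def using g by (intro R.span_base) blast
    then show ?case using step by (simp add: aR actR_kR R.span_add R.span_scale TT_def)
  qed
qed

lemma set_plus_assoc_mem:
  "a \<in> S \<Longrightarrow> b \<in> set_plus S T \<Longrightarrow> R.subspace S \<Longrightarrow> a + b \<in> set_plus S T"
proof -
  assume a: "a \<in> S" and b: "b \<in> set_plus S T" and S: "R.subspace S"
  then obtain x y where "b = x + y" "x \<in> S" "y \<in> T" unfolding set_plus_def by blast
  then have "a + b = (a + x) + y" "a + x \<in> S" using R.subspace_add[OF S a] by (auto simp: add.assoc)
  then show ?thesis unfolding set_plus_def using \<open>y \<in> T\<close> by blast
qed

lemma gen_step:
  assumes IH: "FR (i + 1) \<subseteq> SS (i + 1)"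
  shows "FR i \<subseteq> SS i"
proof -
  interpret L: lev smA ga smB f actR FR actN GN \<phi> i "nI i" "sI i" "pI i" by (rule lev_i)
  have hs: "set_plus (hh i) L.U = FR i" using L.h_sum unfolding hh_eq .
  have step: "TT i t \<subseteq> set_plus (SS i) (TT i (Suc t))" for t
    unfolding TT_def[of i t]
  proof (rule R.span_minimal)
    show "R.subspace (set_plus (SS i) (TT i (Suc t)))"
      by (rule R.subspace_set_plus[OF SS_sub]) (simp add: TT_def)
    show "{actR (f x) m |x m. x \<in> a_ge smA ga t \<and> m \<in> FR i} \<subseteq> set_plus (SS i) (TT i (Suc t))"
    proof
      fix z assume "z \<in> {actR (f x) m |x m. x \<in> a_ge smA ga t \<and> m \<in> FR i}"
      then obtain x m where z: "z = actR (f x) m" "x \<in> a_ge smA ga t" "m \<in> FR i" by auto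
      then obtain hm u r where d: "m = hm + (u + r)" "hm \<in> hh i" "u \<in> FR (i + 1)"
          "r \<in> rad_flat smA ga smB f actR (FR i)"
        using hs unfolding set_plus_def by blast
      have a1: "actR (f x) hm \<in> SS i"
        using act_SS_ge[OF z(2) Rg_SS[OF order_refl hh_Rg[OF d(2)]]] SS_mono[of i "i + int t"] by auto
      have a2: "actR (f x) u \<in> SS i"
        using FR_act[OF d(3)] IH SS_mono[of i "i + 1"] by auto
      have a3: "actR (f x) r \<in> TT i (Suc t)" by (rule act_rad[OF z(2) d(4)])
      have "z = (actR (f x) hm + actR (f x) u) + actR (f x) r" using z d by (simp add: aR add.assoc)
      then show "z \<in> set_plus (SS i) (TT i (Suc t))"
        unfolding set_plus_def using a1 a2 a3 R.subspace_add[OF SS_sub] by blast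
    qed
  qed
  have C: "FR i \<subseteq> set_plus (SS i) (TT i t)" for t
  proof (induct t)
    case 0
    show ?case
    proof
      fix m assume m: "m \<in> FR i"
      have "m = actR (f 1) m" by (simp add: aR)
      then have "m \<in> TT i 0" unfolding TT_def using m a_ge0 by (intro R.span_base) blast
      moreover have "(0::'r) \<in> SS i" using R.subspace_0[OF SS_sub] .
      ultimately show "m \<in> set_plus (SS i) (TT i 0)" unfolding set_plus_def by force
    qed
  next
    case (Suc t)
    show ?case
    proof
      fix m assume "m \<in> FR i"
      then obtain a b where ab: "m = a + b" "a \<in> SS i" "b \<in> TT i t" using Suc unfolding set_plus_def by blast
      then have "b \<in> set_plus (SS i) (TT i (Suc t))" using step by blast
      then show "m \<in> set_plus (SS i) (TT i (Suc t))" using ab set_plus_assoc_mem[OF _ _ SS_sub] by simp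
    qed
  qed
  obtain D where D: "a_ge smA ga D = {0}" using a_ge_nil by blast
  have "TT i D \<subseteq> {0}" unfolding TT_def using D
    by (intro R.span_minimal) (auto simp: aR)
  then show ?thesis using C[of D] unfolding set_plus_def by force
qed

lemma gen: "FR i \<subseteq> SS i"
proof -
  obtain i1 where i1: "\<forall>i\<ge>i1. FR i = {0}" using filt_high by blast
  have "\<forall>i. i1 - i \<le> int k \<longrightarrow> FR i \<subseteq> SS i" for k
  proof (induct k)
    case 0
    then show ?case using i1 R.subspace_0[OF SS_sub] by auto
  next
    case (Suc k)
    show ?case
    proof (intro allI impI)
      fix i assume "i1 - i \<le> int (Suc k)"
      then have "FR (i + 1) \<subseteq> SS (i + 1)" using Suc by auto
      then show "FR i \<subseteq> SS i" by (rule gen_step)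
    qed
  qed
  moreover have "i1 - i \<le> int (nat (i1 - i))" by simp
  ultimately show ?thesis by blast
qed

end



context ctx begin

lemma Rg_dd: "direct_decomp kR Rg"
  unfolding direct_decomp_def
proof (intro conjI allI)
  show "R.subspace (Rg n)" for n by (rule Rg_sub)
  fix v
  obtain i0 where i0: "FR i0 = UNIV" using filt_low by blast
  have "v \<in> SS i0" using gen[of i0] i0 by auto
  then obtain F g where Fg: "finite F" "\<forall>n\<in>F. g n \<in> R.span (Rg n)" "v = sum g F"
    using R.span_UN_decomp[of v Rg "{i0..}"] unfolding SS_span by blast
  define c where "c n = (if n \<in> F then g n else 0)" for n
  have sub: "{n. c n \<noteq> 0} \<subseteq> F" unfolding c_def by auto
  have ex: "finite {n. c n \<noteq> 0} \<and> (\<forall>n. c n \<in> Rg n) \<and> v = sum c {n. c n \<noteq> 0}"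
  proof (intro conjI allI)
    show "finite {n. c n \<noteq> 0}" using finite_subset[OF sub Fg(1)] .
    show "c n \<in> Rg n" for n using Fg(2) Rg_span R.subspace_0[OF Rg_sub] unfolding c_def by auto
    have "sum c {n. c n \<noteq> 0} = sum c F" by (rule sum.mono_neutral_left[OF Fg(1) sub]) auto
    also have "\<dots> = sum g F" unfolding c_def by (rule sum.cong) auto
    finally show "v = sum c {n. c n \<noteq> 0}" using Fg(3) by simp
  qed
  show "\<exists>!c. finite {i. c i \<noteq> 0} \<and> (\<forall>i. c i \<in> Rg i) \<and> v = sum c {i. c i \<noteq> 0}"
  proof (rule ex1I[of _ c])
    show "finite {i. c i \<noteq> 0} \<and> (\<forall>i. c i \<in> Rg i) \<and> v = sum c {i. c i \<noteq> 0}" by (rule ex)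
    fix c' assume c': "finite {i. c' i \<noteq> 0} \<and> (\<forall>i. c' i \<in> Rg i) \<and> v = sum c' {i. c' i \<noteq> 0}"
    define D where "D = {i. c i \<noteq> 0} \<union> {i. c' i \<noteq> 0}"
    have fD: "finite D" unfolding D_def using ex c' by auto
    have "sum c {n. c n \<noteq> 0} = sum c D" by (rule sum.mono_neutral_left[OF fD]) (auto simp: D_def)
    then have s1: "sum c D = v" using ex by simp
    have "sum c' {n. c' n \<noteq> 0} = sum c' D" by (rule sum.mono_neutral_left[OF fD]) (auto simp: D_def)
    then have s2: "sum c' D = v" using c' by simp
    have "sum (\<lambda>n. c' n - c n) D = 0" using s1 s2 by (simp add: sum_subtractf)
    moreover have "\<forall>n\<in>D. c' n - c n \<in> Rg n" using ex c' R.subspace_diff[OF Rg_sub] by blast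
    ultimately have "\<forall>n\<in>D. c' n - c n = 0" using IR[OF fD, of "\<lambda>n. c' n - c n"] by simp
    then have "c' n = c n" for n
    proof (cases "n \<in> D")
      case True then show ?thesis using \<open>\<forall>n\<in>D. c' n - c n = 0\<close> by simp
    next
      case False then show ?thesis unfolding D_def by simp
    qed
    then show "c' = c" by (rule ext)
  qed
qed

lemma SS_FR: "FR i \<subseteq> SS i" by (rule gen)

lemma act_ideal:
  assumes z: "z \<in> B.span {f y * b' | y b'. y \<in> a_ge smA ga t}" and m: "m \<in> FR i"
  shows "actR z m \<in> SS (i + int t)"
  using z
proof (induct rule: B.span_induct_alt)
  case base then show ?case by (simp add: aR R.subspace_0[OF SS_sub])
next
  case (step c g z')
  then obtain y b' where g: "g = f y * b'" "y \<in> a_ge smA ga t" by auto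
  have "actR g m \<in> SS (i + int t)"
    using act_SS_ge[OF g(2) SS_FR[THEN subsetD, OF FR_act[OF m, of b']]] g by (simp add: aR)
  moreover have "actR (smB c g + z') m = kR c (actR g m) + actR z' m"
    by (simp add: aR kscale_def smB_mult1[of c g])
  ultimately show ?case using step R.subspace_add[OF SS_sub] R.subspace_scale[OF SS_sub] by simp
qed

lemma SS_act: "v \<in> SS j \<Longrightarrow> actR b v \<in> SS j"
proof -
  assume "v \<in> SS j"
  then show ?thesis unfolding SS_span
  proof (induct rule: R.span_induct_alt)
    case base then show ?case by (simp add: aR R.span_zero)
  next
    case (step c g y)
    then obtain n where n: "n \<ge> j" "g \<in> Rg n" by auto
    have "actR b g \<in> SS j" using n(2) unfolding grading_from_def
    proof (induct rule: R.span_induct_alt)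
      case base then show ?case by (simp add: aR R.subspace_0[OF SS_sub])
    next
      case (step c' g' y')
      then obtain x m i where g': "g' = actR (f x) m" "i \<le> n" "x \<in> ga (nat (n - i))" "m \<in> hh i" by auto
      have mF: "m \<in> FR i" using g'(4) hh_eq lev.h_FR[OF lev_i] by blast
      have "actR b g' \<in> SS j"
      proof (cases "j \<le> i")
        case True
        then show ?thesis using g' FR_act[OF FR_act[OF mF]] SS_FR SS_mono by (simp add: aR) blast
      next
        case False
        define t where "t = nat (j - i)"
        have xt: "x \<in> a_ge smA ga t" using g' n False unfolding t_def by (intro ga_a_ge) auto
        let ?I = "B.span {f y * b' | y b'. y \<in> a_ge smA ga t}"
        have "f x \<in> ?I" using xt by (intro B.span_base CollectI exI[of _ x] exI[of _ 1]) simp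
        then have "b * f x \<in> ?I" using ideal unfolding two_sided_ideal_def by blast
        then have "actR (b * f x) m \<in> SS (i + int t)" using act_ideal mF by blast
        moreover have "i + int t = j" using False unfolding t_def by simp
        ultimately show ?thesis using g' by (simp add: aR)
      qed
      then show ?case using step R.subspace_add[OF SS_sub] R.subspace_scale[OF SS_sub]
        by (simp add: aR actR_kR)
    qed
    then have "actR b g \<in> R.span (\<Union>n\<in>{j..}. Rg n)" using SS_span by blast
    then show ?case using step by (simp add: aR actR_kR R.span_add R.span_scale)
  qed
qed

lemma Rg_adm: "admissible_hybrid smA ga smB f actR Rg"
  unfolding admissible_hybrid_def hybrid_def
proof (intro conjI allI ballI)
  show "A_module smB actR" by (rule R_mod)
  show "direct_decomp kR Rg" by (rule Rg_dd)
  show "actR (f x) m \<in> Rg (int j + i)" if "x \<in> ga j" "m \<in> Rg i" for j i x m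
    using act_Rg that by blast
  show "submod actR UNIV (grade_ge smB actR Rg j)" for j
    unfolding submod_def SS_def[symmetric]
    using SS_act R.subspace_0[OF SS_sub] R.subspace_add[OF SS_sub] by blast
qed

lemma Rg_morph: "hybrid_morphism actR Rg actN GN \<phi>"
  unfolding hybrid_morphism_def
proof (intro conjI allI)
  show "A_hom actR actN \<phi>" by (rule phi_hom)
  fix n show "\<phi> ` Rg n \<subseteq> GN n"
  proof
    fix z assume "z \<in> \<phi> ` Rg n"
    then obtain v where v: "v \<in> Rg n" "z = \<phi> v" by auto
    have "\<phi> v \<in> GN n" using v(1) unfolding grading_from_def
    proof (induct rule: R.span_induct_alt)
      case base then show ?case using N.subspace_0[OF GN_sub] by simp
    next
      case (step c g y)
      then obtain x m i where g: "g = actR (f x) m" "i \<le> n" "x \<in> ga (nat (n - i))" "m \<in> hh i" by auto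
      have "\<phi> m \<in> GN i" using g(4) hh_eq lev.h_phi[OF lev_i] by blast
      moreover have "int (nat (n - i)) + i = n" using g(2) by simp
      ultimately have "\<phi> g \<in> GN n" using N_grad[OF g(3), of "\<phi> m" i] g(1) by (simp add: phi_act)
      then show ?case using step N.subspace_add[OF GN_sub] N.subspace_scale[OF GN_sub]
        by (simp add: phi_add phi_kR)
    qed
    then show "z \<in> GN n" using v by simp
  qed
qed

lemma hh_props:
  "hh i \<subseteq> FR i
   \<and> submod actR (f ` ga 0) (hh i)
   \<and> hh i \<inter> set_plus (FR (i + 1)) (rad_flat smA ga smB f actR (FR i)) = {0}
   \<and> set_plus (hh i) (set_plus (FR (i + 1)) (rad_flat smA ga smB f actR (FR i))) = FR i
   \<and> \<phi> ` hh i \<subseteq> GN i"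
proof -
  interpret L: lev smA ga smB f actR FR actN GN \<phi> i "nI i" "sI i" "pI i" by (rule lev_i)
  show ?thesis using L.h_FR L.h_submod L.h_inter L.h_sum L.h_phi unfolding hh_eq by blast
qed

end

theorem proposition8p7:
  fixes smA :: "'k::field \<Rightarrow> 'a::ring_1 \<Rightarrow> 'a"
    and ga :: "nat \<Rightarrow> 'a set"
    and smB :: "'k \<Rightarrow> 'b::ring_1 \<Rightarrow> 'b"
    and f :: "'a \<Rightarrow> 'b"
    and actR :: "'b \<Rightarrow> 'r::ab_group_add \<Rightarrow> 'r"
    and FR :: "int \<Rightarrow> 'r set"
    and actN :: "'b \<Rightarrow> 'n::ab_group_add \<Rightarrow> 'n"
    and GN :: "int \<Rightarrow> 'n set"
    and \<phi> :: "'r \<Rightarrow> 'n"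
  assumes setting: "setting smA ga smB f"
    and R_mod: "A_module smB actR"
    and filt_sub: "\<forall>i. submod actR UNIV (FR i)"
    and filt_dec: "\<forall>i. FR (i + 1) \<subseteq> FR i"
    and filt_low: "\<exists>i0. \<forall>i\<le>i0. FR i = UNIV"
    and filt_high: "\<exists>i1. \<forall>i\<ge>i1. FR i = {0}"
    and filt_proj: "\<forall>i. projective_quotient ga f actR (FR i) (FR (i + 1))"
    and N_adm: "admissible_hybrid smA ga smB f actN GN"
    and phi_hom: "A_hom actR actN \<phi>"
    and phi_surj: "surj \<phi>"
    and phi_filt: "\<forall>i. \<phi> ` FR i = grade_ge smB actN GN i"
  shows "\<exists>h :: int \<Rightarrow> 'r set.
           (\<forall>i. h i \<subseteq> FR i
              \<and> submod actR (f ` ga 0) (h i)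
              \<and> h i \<inter> set_plus (FR (i + 1)) (rad_flat smA ga smB f actR (FR i)) = {0}
              \<and> set_plus (h i) (set_plus (FR (i + 1)) (rad_flat smA ga smB f actR (FR i))) = FR i
              \<and> \<phi> ` h i \<subseteq> GN i)
         \<and> admissible_hybrid smA ga smB f actR (grading_from ga smB f actR h)
         \<and> hybrid_morphism actR (grading_from ga smB f actR h) actN GN \<phi>
         \<and> surj \<phi>"
proof -
  have kA: "k_algebra smA" and kB: "k_algebra smB" and gA: "graded_algebra smA ga"
    and fh: "alg_hom smA smB f"
    and id: "\<forall>j. two_sided_ideal smB (module.span smB {f x * b | x b. x \<in> a_ge smA ga j})"
    using setting unfolding setting_def by auto
  interpret C: ctx smA ga smB f actR FR actN GN \<phi>
  proof (intro ctx.intro gradedA.intro ctx_axioms.intro)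
    show "vector_space smA" using kA unfolding k_algebra_def by auto
    show "direct_decomp smA ga" "1 \<in> ga 0" using gA unfolding graded_algebra_def by auto
    show "\<And>i j x y. x \<in> ga i \<Longrightarrow> y \<in> ga j \<Longrightarrow> x * y \<in> ga (i + j)"
      using gA unfolding graded_algebra_def by auto
    have algs: "\<forall>c x y. smA c (x * y) = smA c x * y \<and> smA c (x * y) = x * smA c y"
      using kA unfolding k_algebra_def by blast
    show "\<And>c x y. smA c (x * y) = smA c x * y" using algs by blast
    show "\<And>c x y. smA c (x * y) = x * smA c y" using algs by blast
    show "\<exists>B. finite B \<and> module.span smA B = UNIV" using kA unfolding k_algebra_def by blast
    show "vector_space smB" using kB unfolding k_algebra_def by auto
    have algsB: "\<forall>c x y. smB c (x * y) = smB c x * y \<and> smB c (x * y) = x * smB c y"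
      using kB unfolding k_algebra_def by blast
    show "\<And>c x y. smB c (x * y) = smB c x * y" using algsB by blast
    show "\<And>c x y. smB c (x * y) = x * smB c y" using algsB by blast
  qed (fact fh id R_mod filt_sub filt_dec filt_low filt_high filt_proj N_adm phi_hom phi_filt)+
  have H: "\<forall>i. C.hh i \<subseteq> FR i
              \<and> submod actR (f ` ga 0) (C.hh i)
              \<and> C.hh i \<inter> set_plus (FR (i + 1)) (rad_flat smA ga smB f actR (FR i)) = {0}
              \<and> set_plus (C.hh i) (set_plus (FR (i + 1)) (rad_flat smA ga smB f actR (FR i))) = FR i
              \<and> \<phi> ` C.hh i \<subseteq> GN i"
    by (intro allI) (rule C.hh_props)
  show ?thesis
    by (rule exI[of _ C.hh], intro conjI, rule H, rule C.Rg_adm, rule C.Rg_morph, rule phi_surj)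
qed



end
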